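(* In the construction described in the context, fix $i\ge2$. For $2\le k\le i$ let $T_{ik}=D_iD_{i-1}\cdots D_k\le G_i$. Then: (a) each $T_{ik}$ is normal in $G_i$; (b) each $T_{ik}$ is complemented in $G_i$ by the subgroup $G_{k-1}$; (c) $[T_{ik},R_{k-1}]=T_{ik}$.
   Context: For a group $X$ acted on by a group $Y$, $[X,Y]$ denotes the subgroup generated by all $x^{-1}x^{y}$. A finite $p$-group $P$ is extra-special if $P'=Z(P)$ has order $p$. Construction: let $p_1,p_2,\dots$ be an infinite sequence of primes with $p_{i+1}\ne p_i$ for all $i$. Define finite groups $G_1\le G_2\le\cdots$ and subgroups $R_i\le G_i$ recursively. Let $G_1=R_1$ be cyclic of order $p_1$. For $i\ge2$: let $M_i$ be an extra-special group of order $p_i^3$; let $B$ be the base group of the regular wreath product $M_i\wr G_{i-1}$ (direct product of $|G_{i-1}|$ copies of $M_i$, permuted regularly by $G_{i-1}$); let $B_i=B/[B',G_{i-1}]$ with the induced $G_{i-1}$-action; $D_i=[B_i,R_{i-1}]$; $G_i=D_i\rtimes G_{i-1}$; $R_i=D_i'$. Each $D_j$ ($j\le i$) is regarded as a subgroup of $G_j\le G_i$. *)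

theory Defs
  imports "HOL-Algebra.Algebra"
begin

definition group_center :: "('a, 'b) monoid_scheme \<Rightarrow> 'a set" where
  "group_center G = {z \<in> carrier G. \<forall>x \<in> carrier G. z \<otimes>\<^bsub>G\<^esub> x = x \<otimes>\<^bsub>G\<^esub> z}"

definition extra_special :: "nat \<Rightarrow> ('a, 'b) monoid_scheme \<Rightarrow> bool" where
  "extra_special p P \<longleftrightarrow> group P \<and> Factorial_Ring.prime p \<and> finite (carrier P)
     \<and> (\<exists>n. card (carrier P) = p ^ n)
     \<and> derived P (carrier P) = group_center P
     \<and> card (group_center P) = p"

text \<open>[X,Y] for a group acted on by Y via act (act y x = x^y): the subgroup of G
  generated by all x^{-1} x^y.\<close>
definition comm_act :: "('a, 'b) monoid_scheme \<Rightarrow> ('c \<Rightarrow> 'a \<Rightarrow> 'a) \<Rightarrow> 'a set \<Rightarrow> 'c set \<Rightarrow> 'a set" where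
  "comm_act G act S T = generate G (\<Union>x \<in> S. \<Union>y \<in> T. {inv\<^bsub>G\<^esub> x \<otimes>\<^bsub>G\<^esub> act y x})"

definition conj_act :: "('a, 'b) monoid_scheme \<Rightarrow> 'a \<Rightarrow> 'a \<Rightarrow> 'a" where
  "conj_act G g x = inv\<^bsub>G\<^esub> g \<otimes>\<^bsub>G\<^esub> x \<otimes>\<^bsub>G\<^esub> g"

text \<open>Base group of the regular wreath product M wr H: the direct product of
  |H| copies of M, indexed by the elements of H.\<close>
definition wr_base :: "('a, 'c) monoid_scheme \<Rightarrow> ('m, 'd) monoid_scheme \<Rightarrow> ('a \<Rightarrow> 'm) monoid" where
  "wr_base H M = product_group (carrier H) (\<lambda>_. M)"

definition wr_act :: "('a, 'c) monoid_scheme \<Rightarrow> 'a \<Rightarrow> ('a \<Rightarrow> 'm) \<Rightarrow> ('a \<Rightarrow> 'm)" where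
  "wr_act H g f = (\<lambda>x \<in> carrier H. f (x \<otimes>\<^bsub>H\<^esub> inv\<^bsub>H\<^esub> g))"

definition wr_kernel :: "('a, 'c) monoid_scheme \<Rightarrow> ('m, 'd) monoid_scheme \<Rightarrow> ('a \<Rightarrow> 'm) set" where
  "wr_kernel H M = comm_act (wr_base H M) (wr_act H)
      (derived (wr_base H M) (carrier (wr_base H M))) (carrier H)"

text \<open>B_i = B/[B',H] with the induced H-action (the action maps cosets to cosets).\<close>
definition quot_base :: "('a, 'c) monoid_scheme \<Rightarrow> ('m, 'd) monoid_scheme \<Rightarrow> ('a \<Rightarrow> 'm) set monoid" where
  "quot_base H M = wr_base H M Mod wr_kernel H M"

definition quot_act :: "('a, 'c) monoid_scheme \<Rightarrow> 'a \<Rightarrow> ('a \<Rightarrow> 'm) set \<Rightarrow> ('a \<Rightarrow> 'm) set" where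
  "quot_act H g C = wr_act H g ` C"

text \<open>D_i = [B_i, R_{i-1}], as a subgroup of B_i (H = G_{i-1}, R = R_{i-1}).\<close>
definition D_concrete :: "('a, 'c) monoid_scheme \<Rightarrow> 'a set \<Rightarrow> ('m, 'd) monoid_scheme \<Rightarrow> ('a \<Rightarrow> 'm) set monoid" where
  "D_concrete H R M = (quot_base H M)\<lparr>carrier :=
      comm_act (quot_base H M) (quot_act H) (carrier (quot_base H M)) R\<rparr>"

text \<open>A realisation of the construction inside an ambient group A: the groups
  G_i are the subgroups A restricted to Gc i, the D_i and R_i are subsets of the
  ambient carrier.\<close>
definition construction ::
  "(nat \<Rightarrow> nat) \<Rightarrow> (nat \<Rightarrow> ('m, 'd) monoid_scheme) \<Rightarrow> ('a, 'c) monoid_scheme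
     \<Rightarrow> (nat \<Rightarrow> 'a set) \<Rightarrow> (nat \<Rightarrow> 'a set) \<Rightarrow> (nat \<Rightarrow> 'a set) \<Rightarrow> bool" where
  "construction p M A Gc D R \<longleftrightarrow>
     group A
   \<and> (\<forall>i\<ge>1. Factorial_Ring.prime (p i) \<and> p (Suc i) \<noteq> p i)
   \<and> (\<forall>i\<ge>2. extra_special (p i) (M i) \<and> card (carrier (M i)) = p i ^ 3)
   \<and> subgroup (Gc 1) A \<and> cyclic_group (A\<lparr>carrier := Gc 1\<rparr>) \<and> card (Gc 1) = p 1
   \<and> R 1 = Gc 1
   \<and> (\<forall>i\<ge>2.
        subgroup (Gc i) A
      \<and> Gc (i - 1) \<subseteq> Gc i
      \<and> D i \<lhd> A\<lparr>carrier := Gc i\<rparr>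
      \<and> D i \<inter> Gc (i - 1) = {\<one>\<^bsub>A\<^esub>}
      \<and> D i <#>\<^bsub>A\<^esub> Gc (i - 1) = Gc i
      \<and> (\<exists>\<phi>. \<phi> \<in> iso (A\<lparr>carrier := D i\<rparr>)
                   (D_concrete (A\<lparr>carrier := Gc (i - 1)\<rparr>) (R (i - 1)) (M i))
             \<and> (\<forall>g \<in> Gc (i - 1). \<forall>d \<in> D i.
                  \<phi> (conj_act A g d) = quot_act (A\<lparr>carrier := Gc (i - 1)\<rparr>) g (\<phi> d)))
      \<and> R i = derived A (D i))"

text \<open>T_{ik} = D_i D_{i-1} ... D_k, defined for k \<le> i via T_prod D k n = D_{k+n} ... D_k.\<close>
fun T_prod :: "('a, 'c) monoid_scheme \<Rightarrow> (nat \<Rightarrow> 'a set) \<Rightarrow> nat \<Rightarrow> nat \<Rightarrow> 'a set" where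
  "T_prod A D k 0 = D k"
| "T_prod A D k (Suc n) = D (k + Suc n) <#>\<^bsub>A\<^esub> T_prod A D k n"

definition T_set :: "('a, 'c) monoid_scheme \<Rightarrow> (nat \<Rightarrow> 'a set) \<Rightarrow> nat \<Rightarrow> nat \<Rightarrow> 'a set" where
  "T_set A D i k = T_prod A D k (i - k)"

end

theory Submission
  imports Defs
begin


lemma (in group) inv_cancel_left' [simp]:
  "a \<in> carrier G \<Longrightarrow> z \<in> carrier G \<Longrightarrow> inv a \<otimes> (a \<otimes> z) = z"
  by (simp add: m_assoc[symmetric])
lemma (in group) inv_cancel_left'' [simp]:
  "a \<in> carrier G \<Longrightarrow> z \<in> carrier G \<Longrightarrow> a \<otimes> (inv a \<otimes> z) = z"
  by (simp add: m_assoc[symmetric])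

lemma gen_hom_image:
  assumes G: "group G" and G': "group G'" and h: "h \<in> hom G G'" and S: "S \<subseteq> carrier G"
  shows "h ` generate G S \<subseteq> generate G' (h ` S)"
proof -
  interpret gh: group_hom G G' h using G G' h by (simp add: group_hom_def group_hom_axioms_def)
  { fix x assume "x \<in> generate G S"
    hence "h x \<in> generate G' (h ` S)"
    proof induct
      case one show ?case using generate.one by simp
    next
      case (incl x) thus ?case by (intro generate.incl) auto
    next
      case (inv x) then have "x \<in> carrier G" using S by auto
      thus ?case using inv by (simp add: generate.inv)
    next
      case (eng a b)
      have "a \<in> carrier G" "b \<in> carrier G" using eng gh.G.generate_in_carrier[OF S] by auto
      thus ?case using eng by (simp add: generate.eng)
    qed }
  thus ?thesis by auto
qed

lemma (in group) normal_generateI':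
  assumes "H \<subseteq> carrier G" and "\<And>h g. \<lbrakk> h \<in> H; g \<in> carrier G \<rbrakk> \<Longrightarrow> g \<otimes> h \<otimes> (inv g) \<in> generate G H"
  shows "generate G H \<lhd> G"
proof (rule normal_invI[OF generate_is_subgroup[OF assms(1)]])
  fix g h assume g: "g \<in> carrier G" show "h \<in> generate G H \<Longrightarrow> g \<otimes> h \<otimes> (inv g) \<in> generate G H"
  proof (induct h rule: generate.induct)
    case one thus ?case
      using g generate.one by auto
  next
    case incl show ?case
      using assms(2)[OF incl g] .
  next
    case (inv h)
    hence h: "h \<in> carrier G"
      using assms(1) by auto
    hence "inv (g \<otimes> h \<otimes> (inv g)) = g \<otimes> (inv h) \<otimes> (inv g)"
      using g by (simp add: inv_mult_group m_assoc)
    thus ?case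
      using generate_m_inv_closed[OF assms(1) assms(2)[OF inv g]] by simp
  next
    case (eng h1 h2)
    note in_carrier = eng(1,3)[THEN generate_in_carrier[OF assms(1)]]
    have "g \<otimes> (h1 \<otimes> h2) \<otimes> inv g = (g \<otimes> h1 \<otimes> inv g) \<otimes> (g \<otimes> h2 \<otimes> inv g)"
      using in_carrier g by (simp add: inv_solve_left m_assoc)
    thus ?case
      using generate.eng[OF eng(2,4)] by simp
  qed
qed

lemma comm_act_carrier:
  assumes G: "group G" and S: "S \<subseteq> carrier G" and act: "\<And>x y. x \<in> S \<Longrightarrow> y \<in> T \<Longrightarrow> act y x \<in> carrier G"
  shows "subgroup (comm_act G act S T) G"
proof -
  interpret group G by fact
  show ?thesis unfolding comm_act_def
    by (rule generate_is_subgroup) (use S act in auto)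
qed

lemma (in group) core_abs:
  assumes act_hom: "\<And>y. y \<in> T \<Longrightarrow> act y \<in> hom G G"
    and dec: "\<And>b y. b \<in> carrier G \<Longrightarrow> y \<in> T \<Longrightarrow> \<exists>c x. c \<in> carrier G \<and> act y c = c
                 \<and> x \<in> comm_act G act (carrier G) T \<and> b = c \<otimes>\<^bsub>G\<^esub> x"
  shows "comm_act G act (comm_act G act (carrier G) T) T = comm_act G act (carrier G) T"
proof -
  have G: "group G" by (rule is_group)
  define XX where "XX = comm_act G act (carrier G) T"
  have actc: "act y x \<in> carrier G" if "y \<in> T" "x \<in> carrier G" for x y
    using act_hom[OF that(1)] that(2) by (rule hom_in_carrier)
  have XXsub: "subgroup XX G" unfolding XX_def by (rule comm_act_carrier[OF G]) (auto simp: actc)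
  have XXc: "XX \<subseteq> carrier G" using XXsub subgroup.subset by blast
  have Ysub: "subgroup (comm_act G act XX T) G"
    by (rule comm_act_carrier[OF G XXc]) (use XXc actc in auto)
  show ?thesis unfolding XX_def[symmetric]
  proof
    show "comm_act G act XX T \<subseteq> XX"
    proof -
      have "generate G (\<Union>x\<in>XX. \<Union>y\<in>T. {inv x \<otimes> act y x}) \<subseteq> generate G (\<Union>x\<in>carrier G. \<Union>y\<in>T. {inv x \<otimes> act y x})"
        by (rule mono_generate) (use XXc in blast)
      thus ?thesis unfolding comm_act_def XX_def .
    qed
  next
    have eqX: "XX = generate G (\<Union>x\<in>carrier G. \<Union>y\<in>T. {inv x \<otimes> act y x})"
      by (simp add: XX_def comm_act_def)
    have "generate G (\<Union>x\<in>carrier G. \<Union>y\<in>T. {inv x \<otimes> act y x}) \<subseteq> comm_act G act XX T"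
    proof (rule generate_subgroup_incl[OF _ Ysub])
      show "(\<Union>x\<in>carrier G. \<Union>y\<in>T. {inv x \<otimes> act y x}) \<subseteq> comm_act G act XX T"
      proof clarify
        fix b y assume b: "b \<in> carrier G" and y: "y \<in> T"
        obtain c x where c: "c \<in> carrier G" "act y c = c" and x: "x \<in> XX" and bcx: "b = c \<otimes> x"
          using dec[OF b y] unfolding XX_def by blast
        have xc: "x \<in> carrier G" using x XXc by auto
        have "act y b = c \<otimes> act y x" using bcx hom_mult[OF act_hom[OF y] c(1) xc] c by simp
        hence "inv b \<otimes> act y b = inv x \<otimes> act y x"
          using bcx c xc actc[OF y xc] by (simp add: inv_mult_group m_assoc l_cancel_one inv_solve_left)
        moreover have "inv x \<otimes> act y x \<in> comm_act G act XX T"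
          unfolding comm_act_def by (rule generate.incl) (use x y in auto)
        ultimately show "inv b \<otimes> act y b \<in> comm_act G act XX T" by simp
      qed
    qed
    thus "XX \<subseteq> comm_act G act XX T" using eqX by simp
  qed
qed

lemma iso_transfer:
  assumes A: "group A" and Ds: "subgroup D A" and B: "group B" and Xs: "subgroup XX B"
   and phi: "\<phi> \<in> iso (A\<lparr>carrier := D\<rparr>) (B\<lparr>carrier := XX\<rparr>)"
   and eq: "\<And>g d. g \<in> T \<Longrightarrow> d \<in> D \<Longrightarrow> \<phi> (cact g d) = bact g (\<phi> d)"
   and cD: "\<And>g d. g \<in> T \<Longrightarrow> d \<in> D \<Longrightarrow> cact g d \<in> D"
   and core: "comm_act B bact XX T = XX"
  shows "comm_act A cact D T = D"
proof -
  interpret A: group A by fact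
  interpret B: group B by fact
  define W where "W = comm_act A cact D T"
  have Dc: "D \<subseteq> carrier A" using Ds subgroup.subset by blast
  have Wsub: "W \<subseteq> D" unfolding W_def comm_act_def
    by (rule A.generate_subgroup_incl[OF _ Ds])
       (use cD Ds in \<open>auto intro: subgroup.m_closed subgroup.m_inv_closed\<close>)
  have AD: "group (A\<lparr>carrier := D\<rparr>)" by (rule A.subgroup_imp_group[OF Ds])
  have BX: "group (B\<lparr>carrier := XX\<rparr>)" by (rule B.subgroup_imp_group[OF Xs])
  have hom: "\<phi> \<in> hom (A\<lparr>carrier := D\<rparr>) (B\<lparr>carrier := XX\<rparr>)" and bij: "bij_betw \<phi> D XX"
    using phi by (auto simp: iso_def)
  interpret gh: group_hom "A\<lparr>carrier := D\<rparr>" "B\<lparr>carrier := XX\<rparr>" \<phi>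
    using AD BX hom by (simp add: group_hom_def group_hom_axioms_def)
  have pmult: "\<phi> (a \<otimes>\<^bsub>A\<^esub> b) = \<phi> a \<otimes>\<^bsub>B\<^esub> \<phi> b" if "a \<in> D" "b \<in> D" for a b
    using gh.hom_mult[of a b] that by simp
  have pinv: "\<phi> (inv\<^bsub>A\<^esub> a) = inv\<^bsub>B\<^esub> (\<phi> a)" if "a \<in> D" for a
  proof -
    have "\<phi> (inv\<^bsub>A\<lparr>carrier := D\<rparr>\<^esub> a) = inv\<^bsub>B\<lparr>carrier := XX\<rparr>\<^esub> (\<phi> a)"
      using gh.hom_inv[of a] that by simp
    moreover have "\<phi> a \<in> XX" using bij that bij_betwE by blast
    ultimately show ?thesis using that A.m_inv_consistent[OF Ds] B.m_inv_consistent[OF Xs] by simp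
  qed
  have pone: "\<phi> \<one>\<^bsub>A\<^esub> = \<one>\<^bsub>B\<^esub>" using gh.hom_one by simp
  have pD: "\<phi> a \<in> XX" if "a \<in> D" for a using bij that bij_betwE by blast
  have claim: "\<exists>w\<in>W. b = \<phi> w" if "b \<in> generate B (\<Union>x\<in>XX. \<Union>g\<in>T. {inv\<^bsub>B\<^esub> x \<otimes>\<^bsub>B\<^esub> bact g x})" for b
    using that
  proof induct
    case one
    have "\<one>\<^bsub>A\<^esub> \<in> W" unfolding W_def comm_act_def by (rule generate.one)
    thus ?case using pone by metis
  next
    case (incl h)
    then obtain x g where x: "x \<in> XX" and g: "g \<in> T" and h: "h = inv\<^bsub>B\<^esub> x \<otimes>\<^bsub>B\<^esub> bact g x" by blast
    obtain d where d: "d \<in> D" "x = \<phi> d" using bij x by (metis bij_betw_imp_surj_on imageE)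
    have "h = \<phi> (inv\<^bsub>A\<^esub> d \<otimes>\<^bsub>A\<^esub> cact g d)"
      using h d pmult pinv eq[OF g d(1)] cD[OF g d(1)] Ds by (simp add: subgroup.m_inv_closed)
    moreover have "inv\<^bsub>A\<^esub> d \<otimes>\<^bsub>A\<^esub> cact g d \<in> W"
      unfolding W_def comm_act_def by (rule generate.incl) (use d g in blast)
    ultimately show ?case by blast
  next
    case (inv h)
    then obtain x g where x: "x \<in> XX" and g: "g \<in> T" and h: "h = inv\<^bsub>B\<^esub> x \<otimes>\<^bsub>B\<^esub> bact g x" by blast
    obtain d where d: "d \<in> D" "x = \<phi> d" using bij x by (metis bij_betw_imp_surj_on imageE)
    have wD: "inv\<^bsub>A\<^esub> d \<otimes>\<^bsub>A\<^esub> cact g d \<in> D"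
      using d cD[OF g d(1)] Ds by (simp add: subgroup.m_inv_closed subgroup.m_closed)
    have "h = \<phi> (inv\<^bsub>A\<^esub> d \<otimes>\<^bsub>A\<^esub> cact g d)"
      using h d pmult pinv eq[OF g d(1)] cD[OF g d(1)] Ds by (simp add: subgroup.m_inv_closed)
    hence "inv\<^bsub>B\<^esub> h = \<phi> (inv\<^bsub>A\<^esub> (inv\<^bsub>A\<^esub> d \<otimes>\<^bsub>A\<^esub> cact g d))"
      using pinv[OF wD] by simp
    moreover have "inv\<^bsub>A\<^esub> (inv\<^bsub>A\<^esub> d \<otimes>\<^bsub>A\<^esub> cact g d) \<in> W"
      unfolding W_def comm_act_def by (rule generate.inv) (use d g in blast)
    ultimately show ?case by blast
  next
    case (eng h1 h2)
    then obtain w1 w2 where "w1 \<in> W" "w2 \<in> W" "h1 = \<phi> w1" "h2 = \<phi> w2" by blast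
    moreover have "w1 \<otimes>\<^bsub>A\<^esub> w2 \<in> W" using calculation unfolding W_def comm_act_def
      by (simp add: generate.eng)
    moreover have "w1 \<in> D" "w2 \<in> D" using calculation(1,2) Wsub by (simp_all add: subset_iff)
    moreover have "h1 \<otimes>\<^bsub>B\<^esub> h2 = \<phi> (w1 \<otimes>\<^bsub>A\<^esub> w2)" using calculation pmult[of w1 w2] by simp
    ultimately show ?case by blast
  qed
  show ?thesis unfolding W_def[symmetric]
  proof
    show "W \<subseteq> D" by fact
    show "D \<subseteq> W"
    proof
      fix d assume d: "d \<in> D"
      have "\<phi> d \<in> comm_act B bact XX T" using pD[OF d] core by simp
      then obtain w where w: "w \<in> W" "\<phi> d = \<phi> w" using claim unfolding comm_act_def by blast
      have "inj_on \<phi> D" using bij bij_betw_def by blast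
      moreover have "w \<in> D" using w(1) Wsub by blast
      ultimately have "d = w" using w(2) d inj_onD by metis
      thus "d \<in> W" using w by simp
    qed
  qed
qed



locale wr = H: group H + M: group M
  for H :: "('a, 'c) monoid_scheme" and M :: "('m, 'd) monoid_scheme"
begin

abbreviation "P \<equiv> wr_base H M"

lemma carrier_P: "carrier P = (\<Pi>\<^sub>E i\<in>carrier H. carrier M)"
  by (simp add: wr_base_def)
lemma mult_P: "x \<otimes>\<^bsub>P\<^esub> y = (\<lambda>i\<in>carrier H. x i \<otimes>\<^bsub>M\<^esub> y i)"
  by (simp add: wr_base_def)
lemma one_P: "\<one>\<^bsub>P\<^esub> = (\<lambda>i\<in>carrier H. \<one>\<^bsub>M\<^esub>)"
  by (simp add: wr_base_def)
lemma P_group: "group P"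
  unfolding wr_base_def by (rule product_group) (simp add: M.is_group)
sublocale P: group "wr_base H M" by (rule P_group)

lemma inv_P: "f \<in> carrier P \<Longrightarrow> inv\<^bsub>P\<^esub> f = (\<lambda>i\<in>carrier H. inv\<^bsub>M\<^esub> f i)"
  unfolding wr_base_def by (rule inv_product_group) (auto simp: M.is_group wr_base_def carrier_P)

lemma act_apply [simp]: "x \<in> carrier H \<Longrightarrow> wr_act H g f x = f (x \<otimes>\<^bsub>H\<^esub> inv\<^bsub>H\<^esub> g)"
  by (simp add: wr_act_def)

lemma act_closed: "g \<in> carrier H \<Longrightarrow> f \<in> carrier P \<Longrightarrow> wr_act H g f \<in> carrier P"
  by (auto simp: wr_act_def PiE_iff carrier_P)

lemma act_hom: "g \<in> carrier H \<Longrightarrow> wr_act H g \<in> hom P P"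
  by (rule homI) (auto simp: act_closed wr_act_def PiE_iff mult_P carrier_P)

lemma act_mult: "g \<in> carrier H \<Longrightarrow> a \<in> carrier P \<Longrightarrow> b \<in> carrier P \<Longrightarrow>
    wr_act H g (a \<otimes>\<^bsub>P\<^esub> b) = wr_act H g a \<otimes>\<^bsub>P\<^esub> wr_act H g b"
  by (rule hom_mult[OF act_hom])

lemma act_comp: "g \<in> carrier H \<Longrightarrow> h \<in> carrier H \<Longrightarrow> f \<in> carrier P \<Longrightarrow>
    wr_act H g (wr_act H h f) = wr_act H (h \<otimes>\<^bsub>H\<^esub> g) f"
  by (auto simp: wr_act_def H.inv_mult_group H.m_assoc carrier_P)

lemma act_one: "f \<in> carrier P \<Longrightarrow> wr_act H \<one>\<^bsub>H\<^esub> f = f"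
  by (auto simp: wr_act_def PiE_iff extensional_def carrier_P)

lemma act_inv: "g \<in> carrier H \<Longrightarrow> f \<in> carrier P \<Longrightarrow> wr_act H g (wr_act H (inv\<^bsub>H\<^esub> g) f) = f"
  by (simp add: act_comp act_one)
lemma act_inv': "g \<in> carrier H \<Longrightarrow> f \<in> carrier P \<Longrightarrow> wr_act H (inv\<^bsub>H\<^esub> g) (wr_act H g f) = f"
  by (simp add: act_comp act_one)

lemma act_P_inv: "g \<in> carrier H \<Longrightarrow> f \<in> carrier P \<Longrightarrow> wr_act H g (inv\<^bsub>P\<^esub> f) = inv\<^bsub>P\<^esub> (wr_act H g f)"
proof -
  assume g: "g \<in> carrier H" and f: "f \<in> carrier P"
  have "group_hom P P (wr_act H g)"
    using P_group act_hom[OF g] by (simp add: group_hom_def group_hom_axioms_def)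
  from group_hom.hom_inv[OF this, of f] show ?thesis using f by simp
qed

end


locale wr_es = wr +
  assumes Zc: "derived M (carrier M) = group_center M"
begin

definition "ZP = (\<Pi>\<^sub>E i\<in>carrier H. group_center M)"

lemma ZM_sub: "subgroup (group_center M) M"
  using M.derived_is_subgroup[of "carrier M"] Zc by simp

lemma ZP_sub: "subgroup ZP P"
  unfolding ZP_def wr_base_def
  by (subst PiE_subgroup_product_group) (auto simp: ZM_sub M.is_group)

lemma ZP_comm: "z \<in> ZP \<Longrightarrow> x \<in> carrier P \<Longrightarrow> z \<otimes>\<^bsub>P\<^esub> x = x \<otimes>\<^bsub>P\<^esub> z"
  unfolding ZP_def mult_P by (auto simp: group_center_def PiE_iff carrier_P intro!: restrict_ext)

lemma derP_ZP: "derived P (carrier P) \<subseteq> ZP"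
  unfolding derived_def
proof (rule group.generate_subgroup_incl[OF P_group _ ZP_sub])
  show "derived_set P (carrier P) \<subseteq> ZP"
  proof clarify
    fix a b assume a: "a \<in> carrier P" and b: "b \<in> carrier P"
    have e: "a \<otimes>\<^bsub>P\<^esub> b \<otimes>\<^bsub>P\<^esub> inv\<^bsub>P\<^esub> a \<otimes>\<^bsub>P\<^esub> inv\<^bsub>P\<^esub> b
       = (\<lambda>i\<in>carrier H. a i \<otimes>\<^bsub>M\<^esub> b i \<otimes>\<^bsub>M\<^esub> inv\<^bsub>M\<^esub> a i \<otimes>\<^bsub>M\<^esub> inv\<^bsub>M\<^esub> b i)"
      using a b by (simp add: inv_P mult_P P.m_closed P.inv_closed carrier_P cong: restrict_cong)
    have "a i \<otimes>\<^bsub>M\<^esub> b i \<otimes>\<^bsub>M\<^esub> inv\<^bsub>M\<^esub> a i \<otimes>\<^bsub>M\<^esub> inv\<^bsub>M\<^esub> b i \<in> group_center M"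
      if i: "i \<in> carrier H" for i
    proof -
      have "a i \<in> carrier M" "b i \<in> carrier M" using a b i by (auto simp: carrier_P)
      hence "a i \<otimes>\<^bsub>M\<^esub> b i \<otimes>\<^bsub>M\<^esub> inv\<^bsub>M\<^esub> a i \<otimes>\<^bsub>M\<^esub> inv\<^bsub>M\<^esub> b i \<in> derived M (carrier M)"
        unfolding derived_def by (intro generate.incl) blast
      thus ?thesis using Zc by simp
    qed
    thus "a \<otimes>\<^bsub>P\<^esub> b \<otimes>\<^bsub>P\<^esub> inv\<^bsub>P\<^esub> a \<otimes>\<^bsub>P\<^esub> inv\<^bsub>P\<^esub> b \<in> ZP"
      unfolding e ZP_def by auto
  qed
qed

abbreviation "PD \<equiv> derived P (carrier P)"
abbreviation "K \<equiv> wr_kernel H M"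

lemma PD_sub: "subgroup PD P"
  using group.derived_is_subgroup[OF P_group, of "carrier P"] by simp

lemma PD_carrier: "PD \<subseteq> carrier P"
  using PD_sub subgroup.subset by blast

lemma K_def': "K = generate P (\<Union>x\<in>PD. \<Union>h\<in>carrier H. {inv\<^bsub>P\<^esub> x \<otimes>\<^bsub>P\<^esub> wr_act H h x})"
  by (simp add: wr_kernel_def comm_act_def)

lemma K_sub: "subgroup K P"
  unfolding wr_kernel_def
proof (rule comm_act_carrier[OF P_group PD_carrier])
  fix x y assume "x \<in> PD" "y \<in> carrier H"
  then show "wr_act H y x \<in> carrier P" using act_closed PD_carrier by blast
qed

lemma K_ZP: "K \<subseteq> ZP"
  unfolding K_def'
proof (rule group.generate_subgroup_incl[OF P_group _ ZP_sub], clarify)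
  fix x h assume x: "x \<in> PD" and h: "h \<in> carrier H"
  have xz: "x \<in> ZP" using x derP_ZP by (rule subsetD[rotated])
  have "inv\<^bsub>P\<^esub> x \<in> ZP" by (rule subgroup.m_inv_closed[OF ZP_sub xz])
  moreover have "wr_act H h x \<in> ZP"
  proof -
    have "x (i \<otimes>\<^bsub>H\<^esub> inv\<^bsub>H\<^esub> h) \<in> group_center M" if "i \<in> carrier H" for i
    proof -
      have "i \<otimes>\<^bsub>H\<^esub> inv\<^bsub>H\<^esub> h \<in> carrier H" using that h by simp
      thus ?thesis by (rule PiE_mem[OF xz[unfolded ZP_def]])
    qed
    thus ?thesis unfolding ZP_def wr_act_def by (simp add: restrict_PiE_iff)
  qed
  ultimately show "inv\<^bsub>P\<^esub> x \<otimes>\<^bsub>P\<^esub> wr_act H h x \<in> ZP"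
    by (rule subgroup.m_closed[OF ZP_sub])
qed

lemma K_normal: "K \<lhd> P"
proof (rule group.normal_invI[OF P_group K_sub])
  fix x k assume x: "x \<in> carrier P" and k: "k \<in> K"
  have kz: "k \<in> ZP" using K_ZP k by (rule subsetD)
  have kc: "k \<in> carrier P" by (rule subgroup.mem_carrier[OF K_sub k])
  have "x \<otimes>\<^bsub>P\<^esub> k \<otimes>\<^bsub>P\<^esub> inv\<^bsub>P\<^esub> x = k \<otimes>\<^bsub>P\<^esub> x \<otimes>\<^bsub>P\<^esub> inv\<^bsub>P\<^esub> x"
    using ZP_comm[OF kz x] by simp
  also have "\<dots> = k" using x kc by (simp add: P.m_assoc P.r_inv)
  finally show "x \<otimes>\<^bsub>P\<^esub> k \<otimes>\<^bsub>P\<^esub> inv\<^bsub>P\<^esub> x \<in> K" using k by simp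
qed

lemma PD_inv: "g \<in> carrier H \<Longrightarrow> wr_act H g ` PD \<subseteq> PD"
proof -
  assume g: "g \<in> carrier H"
  have "wr_act H g ` PD \<subseteq> generate P (wr_act H g ` derived_set P (carrier P))"
    unfolding derived_def
    by (rule gen_hom_image[OF P_group P_group act_hom[OF g]])
       (use group.derived_set_in_carrier[OF P_group, of "carrier P"] in simp)
  also have "\<dots> \<subseteq> PD" unfolding derived_def
  proof (rule group.mono_generate[OF P_group], clarify)
    fix a b assume a: "a \<in> carrier P" and b: "b \<in> carrier P"
    have ia: "inv\<^bsub>P\<^esub> a \<in> carrier P" and ib: "inv\<^bsub>P\<^esub> b \<in> carrier P" by (rule P.inv_closed[OF a], rule P.inv_closed[OF b])
    have ab: "a \<otimes>\<^bsub>P\<^esub> b \<in> carrier P" using a b by (rule P.m_closed)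
    have aba: "a \<otimes>\<^bsub>P\<^esub> b \<otimes>\<^bsub>P\<^esub> inv\<^bsub>P\<^esub> a \<in> carrier P" using ab ia by (rule P.m_closed)
    have "wr_act H g (a \<otimes>\<^bsub>P\<^esub> b \<otimes>\<^bsub>P\<^esub> inv\<^bsub>P\<^esub> a \<otimes>\<^bsub>P\<^esub> inv\<^bsub>P\<^esub> b)
       = wr_act H g a \<otimes>\<^bsub>P\<^esub> wr_act H g b \<otimes>\<^bsub>P\<^esub> wr_act H g (inv\<^bsub>P\<^esub> a) \<otimes>\<^bsub>P\<^esub> wr_act H g (inv\<^bsub>P\<^esub> b)"
      by (simp only: act_mult[OF g aba ib] act_mult[OF g ab ia] act_mult[OF g a b])
    also have "\<dots> = wr_act H g a \<otimes>\<^bsub>P\<^esub> wr_act H g b \<otimes>\<^bsub>P\<^esub> inv\<^bsub>P\<^esub> (wr_act H g a) \<otimes>\<^bsub>P\<^esub> inv\<^bsub>P\<^esub> (wr_act H g b)"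
      by (simp only: act_P_inv[OF g a] act_P_inv[OF g b])
    finally have eq: "wr_act H g (a \<otimes>\<^bsub>P\<^esub> b \<otimes>\<^bsub>P\<^esub> inv\<^bsub>P\<^esub> a \<otimes>\<^bsub>P\<^esub> inv\<^bsub>P\<^esub> b)
       = wr_act H g a \<otimes>\<^bsub>P\<^esub> wr_act H g b \<otimes>\<^bsub>P\<^esub> inv\<^bsub>P\<^esub> (wr_act H g a) \<otimes>\<^bsub>P\<^esub> inv\<^bsub>P\<^esub> (wr_act H g b)" .
    have "wr_act H g a \<in> carrier P" "wr_act H g b \<in> carrier P" by (rule act_closed[OF g a], rule act_closed[OF g b])
    with eq show "wr_act H g (a \<otimes>\<^bsub>P\<^esub> b \<otimes>\<^bsub>P\<^esub> inv\<^bsub>P\<^esub> a \<otimes>\<^bsub>P\<^esub> inv\<^bsub>P\<^esub> b) \<in> derived_set P (carrier P)"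
      by blast
  qed
  finally show ?thesis .
qed

lemma K_inv: "g \<in> carrier H \<Longrightarrow> wr_act H g ` K \<subseteq> K"
proof -
  assume g: "g \<in> carrier H"
  let ?S = "\<Union>x\<in>PD. \<Union>h\<in>carrier H. {inv\<^bsub>P\<^esub> x \<otimes>\<^bsub>P\<^esub> wr_act H h x}"
  have Sc: "?S \<subseteq> carrier P"
  proof clarify
    fix x h assume x: "x \<in> PD" and h: "h \<in> carrier H"
    have xc: "x \<in> carrier P" using PD_carrier x by (rule subsetD)
    have "wr_act H h x \<in> carrier P" using h xc by (rule act_closed)
    with xc show "inv\<^bsub>P\<^esub> x \<otimes>\<^bsub>P\<^esub> wr_act H h x \<in> carrier P"
      by (simp add: P.m_closed P.inv_closed)
  qed
  have "wr_act H g ` K \<subseteq> generate P (wr_act H g ` ?S)"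
    unfolding K_def' by (rule gen_hom_image[OF P_group P_group act_hom[OF g] Sc])
  also have "\<dots> \<subseteq> K" unfolding K_def'
  proof (rule group.mono_generate[OF P_group], clarify)
    fix x h assume x: "x \<in> PD" and h: "h \<in> carrier H"
    have xc: "x \<in> carrier P" using PD_carrier x by (rule subsetD)
    define x' where "x' = wr_act H g x"
    define h' where "h' = inv\<^bsub>H\<^esub> g \<otimes>\<^bsub>H\<^esub> h \<otimes>\<^bsub>H\<^esub> g"
    have x': "x' \<in> PD" using PD_inv[OF g] x unfolding x'_def by (simp add: image_subset_iff)
    have h': "h' \<in> carrier H" using g h h'_def by simp
    have "wr_act H h' x' = wr_act H (g \<otimes>\<^bsub>H\<^esub> h') x" using act_comp g h' xc x'_def by simp
    also have "g \<otimes>\<^bsub>H\<^esub> h' = h \<otimes>\<^bsub>H\<^esub> g" using g h by (simp add: h'_def H.m_assoc[symmetric])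
    also have "wr_act H (h \<otimes>\<^bsub>H\<^esub> g) x = wr_act H g (wr_act H h x)" using act_comp g h xc by simp
    finally have e: "wr_act H h' x' = wr_act H g (wr_act H h x)" .
    have "wr_act H g (inv\<^bsub>P\<^esub> x \<otimes>\<^bsub>P\<^esub> wr_act H h x) = inv\<^bsub>P\<^esub> x' \<otimes>\<^bsub>P\<^esub> wr_act H h' x'"
      using g h xc e by (simp add: act_mult act_P_inv x'_def P.inv_closed act_closed)
    thus "wr_act H g (inv\<^bsub>P\<^esub> x \<otimes>\<^bsub>P\<^esub> wr_act H h x) \<in> ?S" using x' h' by blast
  qed
  finally show ?thesis .
qed

lemma K_eq: "g \<in> carrier H \<Longrightarrow> wr_act H g ` K = K"
proof
  assume g: "g \<in> carrier H"
  show "wr_act H g ` K \<subseteq> K" using K_inv[OF g] .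
  show "K \<subseteq> wr_act H g ` K"
  proof
    fix k assume k: "k \<in> K"
    have kc: "k \<in> carrier P" by (rule subgroup.mem_carrier[OF K_sub k])
    have "wr_act H (inv\<^bsub>H\<^esub> g) k \<in> K" using K_inv[of "inv\<^bsub>H\<^esub> g"] g k by (simp add: image_subset_iff)
    moreover have "k = wr_act H g (wr_act H (inv\<^bsub>H\<^esub> g) k)" using act_inv g kc by simp
    ultimately show "k \<in> wr_act H g ` K" by blast
  qed
qed

end


context wr_es begin

abbreviation "B \<equiv> quot_base H M"

lemma B_eq: "B = P Mod K" by (simp add: quot_base_def)

lemma B_group: "group B"
  unfolding B_eq by (rule normal.factorgroup_is_group[OF K_normal])

lemma carrier_B: "carrier B = rcosets\<^bsub>P\<^esub> K"
  unfolding B_eq by (simp add: FactGroup_def)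

lemma mult_B: "x \<otimes>\<^bsub>B\<^esub> y = x <#>\<^bsub>P\<^esub> y"
  unfolding B_eq by simp

lemma pi_hom: "(\<lambda>f. K #>\<^bsub>P\<^esub> f) \<in> hom P B"
  unfolding B_eq by (rule normal.r_coset_hom_Mod[OF K_normal])

lemma pi_mult: "a \<in> carrier P \<Longrightarrow> b \<in> carrier P \<Longrightarrow> K #>\<^bsub>P\<^esub> (a \<otimes>\<^bsub>P\<^esub> b) = (K #>\<^bsub>P\<^esub> a) \<otimes>\<^bsub>B\<^esub> (K #>\<^bsub>P\<^esub> b)"
  using hom_mult[OF pi_hom] by simp

lemma pi_carrier: "a \<in> carrier P \<Longrightarrow> K #>\<^bsub>P\<^esub> a \<in> carrier B"
  using hom_in_carrier[OF pi_hom] by simp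

lemma pi_inv: "a \<in> carrier P \<Longrightarrow> K #>\<^bsub>P\<^esub> (inv\<^bsub>P\<^esub> a) = inv\<^bsub>B\<^esub> (K #>\<^bsub>P\<^esub> a)"
proof -
  assume a: "a \<in> carrier P"
  have "group_hom P B (\<lambda>f. K #>\<^bsub>P\<^esub> f)"
    using P_group B_group pi_hom by (simp add: group_hom_def group_hom_axioms_def)
  from group_hom.hom_inv[OF this a] show ?thesis .
qed

lemma B_elem: "b \<in> carrier B \<Longrightarrow> \<exists>f\<in>carrier P. b = K #>\<^bsub>P\<^esub> f"
  unfolding carrier_B RCOSETS_def by blast

lemma qa_coset: "g \<in> carrier H \<Longrightarrow> f \<in> carrier P \<Longrightarrow> quot_act H g (K #>\<^bsub>P\<^esub> f) = K #>\<^bsub>P\<^esub> wr_act H g f"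
proof -
  assume g: "g \<in> carrier H" and f: "f \<in> carrier P"
  have "quot_act H g (K #>\<^bsub>P\<^esub> f) = (\<Union>k\<in>K. {wr_act H g (k \<otimes>\<^bsub>P\<^esub> f)})"
    unfolding quot_act_def r_coset_def by auto
  also have "\<dots> = (\<Union>k\<in>K. {wr_act H g k \<otimes>\<^bsub>P\<^esub> wr_act H g f})"
  proof (rule SUP_cong[OF refl])
    fix k assume "k \<in> K"
    hence "k \<in> carrier P" by (rule subgroup.mem_carrier[OF K_sub])
    thus "{wr_act H g (k \<otimes>\<^bsub>P\<^esub> f)} = {wr_act H g k \<otimes>\<^bsub>P\<^esub> wr_act H g f}"
      using act_mult[OF g _ f] by simp
  qed
  also have "\<dots> = (\<Union>k\<in>wr_act H g ` K. {k \<otimes>\<^bsub>P\<^esub> wr_act H g f})" by auto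
  also have "\<dots> = K #>\<^bsub>P\<^esub> wr_act H g f" unfolding K_eq[OF g] r_coset_def ..
  finally show ?thesis .
qed

lemma qa_hom: "g \<in> carrier H \<Longrightarrow> quot_act H g \<in> hom B B"
proof (rule homI)
  assume g: "g \<in> carrier H"
  fix b assume "b \<in> carrier B"
  then obtain f where f: "f \<in> carrier P" "b = K #>\<^bsub>P\<^esub> f" using B_elem by blast
  show "quot_act H g b \<in> carrier B"
    using f qa_coset[OF g f(1)] pi_carrier[OF act_closed[OF g f(1)]] by simp
next
  assume g: "g \<in> carrier H"
  fix b1 b2 assume "b1 \<in> carrier B" "b2 \<in> carrier B"
  then obtain f1 f2 where f: "f1 \<in> carrier P" "b1 = K #>\<^bsub>P\<^esub> f1" "f2 \<in> carrier P" "b2 = K #>\<^bsub>P\<^esub> f2"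
    using B_elem by metis
  have "quot_act H g (b1 \<otimes>\<^bsub>B\<^esub> b2) = quot_act H g (K #>\<^bsub>P\<^esub> (f1 \<otimes>\<^bsub>P\<^esub> f2))"
    using f pi_mult by simp
  also have "\<dots> = K #>\<^bsub>P\<^esub> (wr_act H g f1 \<otimes>\<^bsub>P\<^esub> wr_act H g f2)"
    using qa_coset[OF g P.m_closed[OF f(1,3)]] act_mult[OF g f(1,3)] by simp
  also have "\<dots> = quot_act H g b1 \<otimes>\<^bsub>B\<^esub> quot_act H g b2"
    using f pi_mult[OF act_closed[OF g f(1)] act_closed[OF g f(3)]] qa_coset[OF g] by simp
  finally show "quot_act H g (b1 \<otimes>\<^bsub>B\<^esub> b2) = quot_act H g b1 \<otimes>\<^bsub>B\<^esub> quot_act H g b2" .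
qed

lemma dec_B:
  assumes T: "T \<subseteq> carrier H" and g: "g \<in> T"
    and decP: "\<And>f. f \<in> carrier P \<Longrightarrow> \<exists>c x. c \<in> carrier P \<and> wr_act H g c = c
                  \<and> x \<in> comm_act P (wr_act H) (carrier P) T \<and> f = c \<otimes>\<^bsub>P\<^esub> x"
    and b: "b \<in> carrier B"
  shows "\<exists>c x. c \<in> carrier B \<and> quot_act H g c = c
                  \<and> x \<in> comm_act B (quot_act H) (carrier B) T \<and> b = c \<otimes>\<^bsub>B\<^esub> x"
proof -
  have gH: "g \<in> carrier H" using T g by (rule subsetD)
  obtain f where f: "f \<in> carrier P" "b = K #>\<^bsub>P\<^esub> f" using B_elem[OF b] by blast
  obtain c x where c: "c \<in> carrier P" "wr_act H g c = c" and x: "x \<in> comm_act P (wr_act H) (carrier P) T"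
     and fcx: "f = c \<otimes>\<^bsub>P\<^esub> x" using decP[OF f(1)] by blast
  let ?SP = "\<Union>f\<in>carrier P. \<Union>h\<in>T. {inv\<^bsub>P\<^esub> f \<otimes>\<^bsub>P\<^esub> wr_act H h f}"
  let ?SB = "\<Union>b\<in>carrier B. \<Union>h\<in>T. {inv\<^bsub>B\<^esub> b \<otimes>\<^bsub>B\<^esub> quot_act H h b}"
  have SPc: "?SP \<subseteq> carrier P"
  proof clarify
    fix f h assume f: "f \<in> carrier P" and h: "h \<in> T"
    have "wr_act H h f \<in> carrier P" using act_closed[OF subsetD[OF T h] f] .
    thus "inv\<^bsub>P\<^esub> f \<otimes>\<^bsub>P\<^esub> wr_act H h f \<in> carrier P" using f by simp
  qed
  have xc: "x \<in> carrier P"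
    using x unfolding comm_act_def using P.generate_in_carrier[OF SPc] by blast
  have "(\<lambda>f. K #>\<^bsub>P\<^esub> f) ` generate P ?SP \<subseteq> generate B ((\<lambda>f. K #>\<^bsub>P\<^esub> f) ` ?SP)"
    by (rule gen_hom_image[OF P_group B_group pi_hom SPc])
  also have "\<dots> \<subseteq> generate B ?SB"
  proof (rule group.mono_generate[OF B_group], clarify)
    fix f h assume f: "f \<in> carrier P" and h: "h \<in> T"
    have hH: "h \<in> carrier H" using T h by (rule subsetD)
    have "K #>\<^bsub>P\<^esub> (inv\<^bsub>P\<^esub> f \<otimes>\<^bsub>P\<^esub> wr_act H h f)
        = inv\<^bsub>B\<^esub> (K #>\<^bsub>P\<^esub> f) \<otimes>\<^bsub>B\<^esub> quot_act H h (K #>\<^bsub>P\<^esub> f)"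
      using pi_mult[OF P.inv_closed[OF f] act_closed[OF hH f]] pi_inv[OF f] qa_coset[OF hH f] by simp
    moreover have "K #>\<^bsub>P\<^esub> f \<in> carrier B" by (rule pi_carrier[OF f])
    ultimately show "K #>\<^bsub>P\<^esub> (inv\<^bsub>P\<^esub> f \<otimes>\<^bsub>P\<^esub> wr_act H h f) \<in> ?SB" using h by blast
  qed
  finally have "K #>\<^bsub>P\<^esub> x \<in> comm_act B (quot_act H) (carrier B) T"
    using x unfolding comm_act_def by blast
  moreover have "quot_act H g (K #>\<^bsub>P\<^esub> c) = K #>\<^bsub>P\<^esub> c" using qa_coset[OF gH c(1)] c(2) by simp
  moreover have "b = (K #>\<^bsub>P\<^esub> c) \<otimes>\<^bsub>B\<^esub> (K #>\<^bsub>P\<^esub> x)" using f fcx pi_mult[OF c(1) xc] by simp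
  moreover have "K #>\<^bsub>P\<^esub> c \<in> carrier B" by (rule pi_carrier[OF c(1)])
  ultimately show ?thesis by blast
qed

lemma core_B:
  assumes T: "T \<subseteq> carrier H"
    and decP: "\<And>g f. g \<in> T \<Longrightarrow> f \<in> carrier P \<Longrightarrow> \<exists>c x. c \<in> carrier P \<and> wr_act H g c = c
                  \<and> x \<in> comm_act P (wr_act H) (carrier P) T \<and> f = c \<otimes>\<^bsub>P\<^esub> x"
  shows "comm_act B (quot_act H) (comm_act B (quot_act H) (carrier B) T) T = comm_act B (quot_act H) (carrier B) T"
proof (rule group.core_abs[OF B_group])
  show "\<And>y. y \<in> T \<Longrightarrow> quot_act H y \<in> hom B B" using qa_hom T by blast
  show "\<And>b y. b \<in> carrier B \<Longrightarrow> y \<in> T \<Longrightarrow> \<exists>c x. c \<in> carrier B \<and> quot_act H y c = c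
                  \<and> x \<in> comm_act B (quot_act H) (carrier B) T \<and> b = c \<otimes>\<^bsub>B\<^esub> x"
    using dec_B[OF T _ decP] by blast
qed

end


context wr begin

definition ee :: "'a \<Rightarrow> 'm \<Rightarrow> ('a \<Rightarrow> 'm)" where
  "ee y m = (\<lambda>x\<in>carrier H. if x = y then m else \<one>\<^bsub>M\<^esub>)"
definition ind :: "'a set \<Rightarrow> 'm \<Rightarrow> ('a \<Rightarrow> 'm)" where
  "ind S u = (\<lambda>x\<in>carrier H. if x \<in> S then u else \<one>\<^bsub>M\<^esub>)"
definition restr :: "('a \<Rightarrow> 'm) \<Rightarrow> 'a set \<Rightarrow> ('a \<Rightarrow> 'm)" where
  "restr f S = (\<lambda>x\<in>carrier H. if x \<in> S then f x else \<one>\<^bsub>M\<^esub>)"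

lemma ee_carrier: "m \<in> carrier M \<Longrightarrow> ee y m \<in> carrier P"
  by (auto simp: ee_def carrier_P)
lemma ind_carrier: "u \<in> carrier M \<Longrightarrow> ind S u \<in> carrier P"
  by (auto simp: ind_def carrier_P)

lemma ee_mult: "a \<in> carrier M \<Longrightarrow> b \<in> carrier M \<Longrightarrow> ee y a \<otimes>\<^bsub>P\<^esub> ee y b = ee y (a \<otimes>\<^bsub>M\<^esub> b)"
  by (auto simp: ee_def mult_P intro!: restrict_ext)

lemma ee_one: "ee y \<one>\<^bsub>M\<^esub> = \<one>\<^bsub>P\<^esub>"
  by (auto simp: ee_def one_P intro!: restrict_ext)

lemma ee_pow: "a \<in> carrier M \<Longrightarrow> ee y a [^]\<^bsub>P\<^esub> (n::nat) = ee y (a [^]\<^bsub>M\<^esub> n)"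
proof (induct n)
  case 0 thus ?case by (simp add: ee_one)
next
  case (Suc n) thus ?case by (simp add: ee_mult)
qed

lemma ee_act: "h \<in> carrier H \<Longrightarrow> y \<in> carrier H \<Longrightarrow> wr_act H h (ee y m) = ee (y \<otimes>\<^bsub>H\<^esub> h) m"
proof -
  assume h: "h \<in> carrier H" and y: "y \<in> carrier H"
  have "(x \<otimes>\<^bsub>H\<^esub> inv\<^bsub>H\<^esub> h = y) = (x = y \<otimes>\<^bsub>H\<^esub> h)" if "x \<in> carrier H" for x
    using H.inv_solve_right'[OF y that h] .
  thus ?thesis unfolding wr_act_def ee_def using h by (auto intro!: restrict_ext)
qed

lemma ind_empty: "ind {} u = \<one>\<^bsub>P\<^esub>"
  by (simp add: ind_def one_P)

lemma ind_insert: "z \<notin> S \<Longrightarrow> u \<in> carrier M \<Longrightarrow> ind (insert z S) u = ind S u \<otimes>\<^bsub>P\<^esub> ee z u"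
  by (auto simp: ind_def ee_def mult_P intro!: restrict_ext)

lemma restr_carrier: "f \<in> carrier P \<Longrightarrow> restr f S \<in> carrier P"
  by (auto simp: restr_def carrier_P)

lemma restr_empty: "restr f {} = \<one>\<^bsub>P\<^esub>"
  by (simp add: restr_def one_P)

lemma restr_insert: "y \<notin> S \<Longrightarrow> y \<in> carrier H \<Longrightarrow> f \<in> carrier P \<Longrightarrow>
    restr f (insert y S) = restr f S \<otimes>\<^bsub>P\<^esub> ee y (f y)"
  by (auto simp: restr_def ee_def mult_P carrier_P PiE_iff intro!: restrict_ext)

lemma restr_full: "f \<in> carrier P \<Longrightarrow> restr f (carrier H) = f"
  by (auto simp: restr_def carrier_P PiE_iff extensional_def)


lemma dec_P:
  assumes fin: "finite (carrier H)" and finM: "finite (carrier M)" and M1: "card (carrier M) > 1"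
    and T: "T \<subseteq> carrier H" and g: "g \<in> T" and gpow: "\<And>j::nat. g [^]\<^bsub>H\<^esub> j \<in> T"
    and cop: "coprime (group.ord H g) (card (carrier M))"
    and f: "f \<in> carrier P"
  shows "\<exists>c x. c \<in> carrier P \<and> wr_act H g c = c \<and> x \<in> comm_act P (wr_act H) (carrier P) T
             \<and> f = c \<otimes>\<^bsub>P\<^esub> x"
proof -
  define SP where "SP = (\<Union>f\<in>carrier P. \<Union>h\<in>T. {inv\<^bsub>P\<^esub> f \<otimes>\<^bsub>P\<^esub> wr_act H h f})"
  define XP where "XP = comm_act P (wr_act H) (carrier P) T"
  have XP_eq: "XP = generate P SP" by (simp add: XP_def SP_def comm_act_def)
  have gH: "g \<in> carrier H" using T g by (rule subsetD)
  have SPc: "SP \<subseteq> carrier P"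
  proof (unfold SP_def, clarify)
    fix f h assume f: "f \<in> carrier P" and h: "h \<in> T"
    have "wr_act H h f \<in> carrier P" using act_closed[OF subsetD[OF T h] f] .
    thus "inv\<^bsub>P\<^esub> f \<otimes>\<^bsub>P\<^esub> wr_act H h f \<in> carrier P" using f by simp
  qed
  have gen: "inv\<^bsub>P\<^esub> a \<otimes>\<^bsub>P\<^esub> wr_act H h a \<in> XP" if "h \<in> T" "a \<in> carrier P" for h a
    unfolding XP_eq SP_def by (rule generate.incl) (use that in blast)
  have XPsub: "subgroup XP P" unfolding XP_eq by (rule P.generate_is_subgroup[OF SPc])
  have XPc: "x \<in> carrier P" if "x \<in> XP" for x by (rule subgroup.mem_carrier[OF XPsub that])
  have XPnorm: "XP \<lhd> P" unfolding XP_eq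
  proof (rule P.normal_generateI'[OF SPc])
    fix s t assume s: "s \<in> SP" and t: "t \<in> carrier P"
    obtain a h where a: "a \<in> carrier P" and h: "h \<in> T" and sa: "s = inv\<^bsub>P\<^esub> a \<otimes>\<^bsub>P\<^esub> wr_act H h a"
      using s unfolding SP_def by blast
    have hH: "h \<in> carrier H" using T h by (rule subsetD)
    define u where "u = inv\<^bsub>P\<^esub> t"
    have u: "u \<in> carrier P" unfolding u_def using t by simp
    have tu: "t = inv\<^bsub>P\<^esub> u" unfolding u_def using t by simp
    have au: "a \<otimes>\<^bsub>P\<^esub> u \<in> carrier P" using a u by simp
    have A: "wr_act H h a \<in> carrier P" "wr_act H h u \<in> carrier P" using act_closed[OF hH] a u by auto
    have "t \<otimes>\<^bsub>P\<^esub> s \<otimes>\<^bsub>P\<^esub> inv\<^bsub>P\<^esub> t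
        = (inv\<^bsub>P\<^esub> (a \<otimes>\<^bsub>P\<^esub> u) \<otimes>\<^bsub>P\<^esub> wr_act H h (a \<otimes>\<^bsub>P\<^esub> u))
          \<otimes>\<^bsub>P\<^esub> inv\<^bsub>P\<^esub> (inv\<^bsub>P\<^esub> u \<otimes>\<^bsub>P\<^esub> wr_act H h u)"
      unfolding tu sa act_mult[OF hH a u] using a u A
      by (simp add: P.inv_mult_group P.m_assoc)
    moreover have "inv\<^bsub>P\<^esub> (a \<otimes>\<^bsub>P\<^esub> u) \<otimes>\<^bsub>P\<^esub> wr_act H h (a \<otimes>\<^bsub>P\<^esub> u) \<in> generate P SP"
      unfolding SP_def by (rule generate.incl) (use h au in blast)
    moreover have "inv\<^bsub>P\<^esub> (inv\<^bsub>P\<^esub> u \<otimes>\<^bsub>P\<^esub> wr_act H h u) \<in> generate P SP"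
      unfolding SP_def by (rule generate.inv) (use h u in blast)
    ultimately show "t \<otimes>\<^bsub>P\<^esub> s \<otimes>\<^bsub>P\<^esub> inv\<^bsub>P\<^esub> t \<in> generate P SP"
      by (simp add: generate.eng)
  qed
  have conj: "inv\<^bsub>P\<^esub> t \<otimes>\<^bsub>P\<^esub> x \<otimes>\<^bsub>P\<^esub> t \<in> XP" if "t \<in> carrier P" "x \<in> XP" for t x
  proof -
    have "\<forall>x\<in>carrier P. \<forall>h\<in>XP. x \<otimes>\<^bsub>P\<^esub> h \<otimes>\<^bsub>P\<^esub> inv\<^bsub>P\<^esub> x \<in> XP"
      using XPnorm unfolding P.normal_inv_iff by blast
    from this[rule_format, OF P.inv_closed[OF that(1)] that(2)]
    have "inv\<^bsub>P\<^esub> t \<otimes>\<^bsub>P\<^esub> x \<otimes>\<^bsub>P\<^esub> inv\<^bsub>P\<^esub> (inv\<^bsub>P\<^esub> t) \<in> XP" .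
    thus ?thesis using that by simp
  qed
  define Good where "Good f \<longleftrightarrow> (\<exists>c x. c \<in> carrier P \<and> wr_act H g c = c \<and> x \<in> XP \<and> f = c \<otimes>\<^bsub>P\<^esub> x)" for f
  have good_one: "Good \<one>\<^bsub>P\<^esub>"
    unfolding Good_def
    by (rule exI[of _ "\<one>\<^bsub>P\<^esub>"], rule exI[of _ "\<one>\<^bsub>P\<^esub>"])
       (simp add: subgroup.one_closed[OF XPsub] hom_one[OF act_hom[OF gH] P_group P_group])
  have good_mult: "Good (f1 \<otimes>\<^bsub>P\<^esub> f2)" if G1: "Good f1" and G2: "Good f2" for f1 f2
  proof -
    obtain c1 x1 where 1: "c1 \<in> carrier P" "wr_act H g c1 = c1" "x1 \<in> XP" "f1 = c1 \<otimes>\<^bsub>P\<^esub> x1"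
      using G1 unfolding Good_def by blast
    obtain c2 x2 where 2: "c2 \<in> carrier P" "wr_act H g c2 = c2" "x2 \<in> XP" "f2 = c2 \<otimes>\<^bsub>P\<^esub> x2"
      using G2 unfolding Good_def by blast
    have x1: "x1 \<in> carrier P" "x2 \<in> carrier P" using XPc[OF 1(3)] XPc[OF 2(3)] .
    have "(c1 \<otimes>\<^bsub>P\<^esub> c2) \<otimes>\<^bsub>P\<^esub> ((inv\<^bsub>P\<^esub> c2 \<otimes>\<^bsub>P\<^esub> x1 \<otimes>\<^bsub>P\<^esub> c2) \<otimes>\<^bsub>P\<^esub> x2)
        = c1 \<otimes>\<^bsub>P\<^esub> (c2 \<otimes>\<^bsub>P\<^esub> (inv\<^bsub>P\<^esub> c2 \<otimes>\<^bsub>P\<^esub> (x1 \<otimes>\<^bsub>P\<^esub> (c2 \<otimes>\<^bsub>P\<^esub> x2))))"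
      using 1(1) 2(1) x1 by (simp only: P.m_assoc P.inv_closed P.m_closed)
    also have "\<dots> = c1 \<otimes>\<^bsub>P\<^esub> (x1 \<otimes>\<^bsub>P\<^esub> (c2 \<otimes>\<^bsub>P\<^esub> x2))"
      using 1(1) 2(1) x1 by (simp only: P.inv_cancel_left'' P.m_closed)
    also have "\<dots> = f1 \<otimes>\<^bsub>P\<^esub> f2" using 1 2 x1 by (simp add: P.m_assoc)
    finally have eqf: "f1 \<otimes>\<^bsub>P\<^esub> f2 = (c1 \<otimes>\<^bsub>P\<^esub> c2) \<otimes>\<^bsub>P\<^esub> ((inv\<^bsub>P\<^esub> c2 \<otimes>\<^bsub>P\<^esub> x1 \<otimes>\<^bsub>P\<^esub> c2) \<otimes>\<^bsub>P\<^esub> x2)" by (rule sym)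
    have fx: "wr_act H g (c1 \<otimes>\<^bsub>P\<^esub> c2) = c1 \<otimes>\<^bsub>P\<^esub> c2" using act_mult[OF gH 1(1) 2(1)] 1(2) 2(2) by simp
    have inx: "(inv\<^bsub>P\<^esub> c2 \<otimes>\<^bsub>P\<^esub> x1 \<otimes>\<^bsub>P\<^esub> c2) \<otimes>\<^bsub>P\<^esub> x2 \<in> XP"
      using conj[OF 2(1) 1(3)] 2(3) by (rule subgroup.m_closed[OF XPsub])
    have cc: "c1 \<otimes>\<^bsub>P\<^esub> c2 \<in> carrier P" using 1(1) 2(1) by (rule P.m_closed)
    show ?thesis unfolding Good_def using eqf fx inx cc by blast
  qed
  have good_ee: "Good (ee y m)" if y: "y \<in> carrier H" and m: "m \<in> carrier M" for y m
  proof -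
    define n where "n = group.ord H g"
    have n1: "n \<ge> 1" unfolding n_def by (rule H.ord_ge_1[OF fin gH])
    have gn: "g [^]\<^bsub>H\<^esub> n = \<one>\<^bsub>H\<^esub>" unfolding n_def by (rule H.pow_ord_eq_1[OF gH])
    obtain k q where nk: "n * k = card (carrier M) * q + 1"
      using bezout_nat[of n "card (carrier M)"] n1 cop unfolding n_def by (auto simp: coprime_iff_gcd_eq_1)
    define u where "u = m [^]\<^bsub>M\<^esub> k"
    have u: "u \<in> carrier M" unfolding u_def using m by simp
    have un: "u [^]\<^bsub>M\<^esub> n = m"
    proof -
      define c where "c = card (carrier M)"
      have mc: "m [^]\<^bsub>M\<^esub> c = \<one>\<^bsub>M\<^esub>" using M.pow_order_eq_1[OF m] unfolding c_def order_def .
      have "u [^]\<^bsub>M\<^esub> n = m [^]\<^bsub>M\<^esub> (n * k)" unfolding u_def using m by (simp add: M.nat_pow_pow mult.commute)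
      also have "\<dots> = m [^]\<^bsub>M\<^esub> (c * q) \<otimes>\<^bsub>M\<^esub> m [^]\<^bsub>M\<^esub> (1::nat)"
        unfolding nk c_def by (simp only: M.nat_pow_mult[OF m])
      also have "m [^]\<^bsub>M\<^esub> (c * q) = \<one>\<^bsub>M\<^esub>"
        using m mc by (simp add: M.nat_pow_pow[symmetric])
      finally show ?thesis using m by simp
    qed
    define Orb where "Orb = {y \<otimes>\<^bsub>H\<^esub> g [^]\<^bsub>H\<^esub> j | j::nat. True}"
    have Orbc: "Orb \<subseteq> carrier H" using y gH by (auto simp: Orb_def)
    have Orbf: "finite Orb" using finite_subset[OF Orbc fin] .
    define e where "e = ee y u"
    have ec: "e \<in> carrier P" unfolding e_def using ee_carrier[OF u] .
    have claim: "\<exists>x\<in>XP. ind S u = e [^]\<^bsub>P\<^esub> card S \<otimes>\<^bsub>P\<^esub> x" if "finite S" "S \<subseteq> Orb" for S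
      using that
    proof (induct S rule: finite_induct)
      case empty show ?case
        by (rule bexI[of _ "\<one>\<^bsub>P\<^esub>"]) (simp_all add: ind_empty subgroup.one_closed[OF XPsub])
    next
      case (insert z S)
      have "S \<subseteq> Orb" using insert(4) by simp
      then obtain x where x: "x \<in> XP" "ind S u = e [^]\<^bsub>P\<^esub> card S \<otimes>\<^bsub>P\<^esub> x" using insert(3) by blast
      obtain j :: nat where zj: "z = y \<otimes>\<^bsub>H\<^esub> g [^]\<^bsub>H\<^esub> j" using insert(4) unfolding Orb_def by blast
      have gj: "g [^]\<^bsub>H\<^esub> j \<in> T" by (rule gpow)
      have gjH: "g [^]\<^bsub>H\<^esub> j \<in> carrier H" using gH by simp
      define s where "s = inv\<^bsub>P\<^esub> e \<otimes>\<^bsub>P\<^esub> wr_act H (g [^]\<^bsub>H\<^esub> j) e"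
      have s: "s \<in> XP" unfolding s_def by (rule gen[OF gj ec])
      have sc: "s \<in> carrier P" by (rule XPc[OF s])
      have xc: "x \<in> carrier P" by (rule XPc[OF x(1)])
      have ez: "ee z u = e \<otimes>\<^bsub>P\<^esub> s"
        using ee_act[OF gjH y, of u] zj act_closed[OF gjH ec] ec ee_carrier[OF u] unfolding s_def e_def by simp
      have pc: "e [^]\<^bsub>P\<^esub> card S \<in> carrier P" using ec by simp
      have "ind (insert z S) u = (e [^]\<^bsub>P\<^esub> card S \<otimes>\<^bsub>P\<^esub> x) \<otimes>\<^bsub>P\<^esub> (e \<otimes>\<^bsub>P\<^esub> s)"
        using ind_insert[OF insert(2) u] x(2) ez by simp
      also have "\<dots> = (e [^]\<^bsub>P\<^esub> card S \<otimes>\<^bsub>P\<^esub> e) \<otimes>\<^bsub>P\<^esub> ((inv\<^bsub>P\<^esub> e \<otimes>\<^bsub>P\<^esub> x \<otimes>\<^bsub>P\<^esub> e) \<otimes>\<^bsub>P\<^esub> s)"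
        using pc xc ec sc by (simp add: P.m_assoc)
      also have "e [^]\<^bsub>P\<^esub> card S \<otimes>\<^bsub>P\<^esub> e = e [^]\<^bsub>P\<^esub> card (insert z S)" using insert(1,2) by simp
      finally show ?case using subgroup.m_closed[OF XPsub conj[OF ec x(1)] s] by blast
    qed
    have fixed: "wr_act H g (ind Orb u) = ind Orb u"
    proof -
      have ginv: "g [^]\<^bsub>H\<^esub> (n - 1) = inv\<^bsub>H\<^esub> g"
      proof -
        have "g [^]\<^bsub>H\<^esub> (n - 1) \<otimes>\<^bsub>H\<^esub> g = g [^]\<^bsub>H\<^esub> (Suc (n - 1))" by simp
        also have "Suc (n - 1) = n" using n1 by simp
        finally have "g [^]\<^bsub>H\<^esub> (n - 1) \<otimes>\<^bsub>H\<^esub> g = \<one>\<^bsub>H\<^esub>" using gn by simp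
        thus ?thesis using H.inv_equality gH by simp
      qed
      have iff: "(x \<otimes>\<^bsub>H\<^esub> inv\<^bsub>H\<^esub> g \<in> Orb) = (x \<in> Orb)" if x: "x \<in> carrier H" for x
      proof
        assume "x \<otimes>\<^bsub>H\<^esub> inv\<^bsub>H\<^esub> g \<in> Orb"
        then obtain j :: nat where "x \<otimes>\<^bsub>H\<^esub> inv\<^bsub>H\<^esub> g = y \<otimes>\<^bsub>H\<^esub> g [^]\<^bsub>H\<^esub> j" unfolding Orb_def by blast
        hence "x = y \<otimes>\<^bsub>H\<^esub> g [^]\<^bsub>H\<^esub> j \<otimes>\<^bsub>H\<^esub> g"
          using H.inv_solve_right'[of "y \<otimes>\<^bsub>H\<^esub> g [^]\<^bsub>H\<^esub> j" x g] x gH y by simp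
        also have "\<dots> = y \<otimes>\<^bsub>H\<^esub> g [^]\<^bsub>H\<^esub> (Suc j)" using y gH by (simp add: H.m_assoc)
        finally show "x \<in> Orb" unfolding Orb_def by blast
      next
        assume "x \<in> Orb"
        then obtain j :: nat where xj: "x = y \<otimes>\<^bsub>H\<^esub> g [^]\<^bsub>H\<^esub> j" unfolding Orb_def by blast
        have "x \<otimes>\<^bsub>H\<^esub> inv\<^bsub>H\<^esub> g = y \<otimes>\<^bsub>H\<^esub> (g [^]\<^bsub>H\<^esub> j \<otimes>\<^bsub>H\<^esub> g [^]\<^bsub>H\<^esub> (n - 1))"
          using xj ginv y gH by (simp add: H.m_assoc)
        also have "\<dots> = y \<otimes>\<^bsub>H\<^esub> g [^]\<^bsub>H\<^esub> (j + (n - 1))" using gH by (simp add: H.nat_pow_mult)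
        finally show "x \<otimes>\<^bsub>H\<^esub> inv\<^bsub>H\<^esub> g \<in> Orb" unfolding Orb_def by blast
      qed
      show ?thesis unfolding ind_def wr_act_def using iff gH by (auto intro!: restrict_ext)
    qed
    have cardO: "card Orb = n"
    proof -
      have "Orb = (\<lambda>j. y \<otimes>\<^bsub>H\<^esub> g [^]\<^bsub>H\<^esub> j) ` {0..n-1}"
      proof
        show "(\<lambda>j. y \<otimes>\<^bsub>H\<^esub> g [^]\<^bsub>H\<^esub> j) ` {0..n-1} \<subseteq> Orb" unfolding Orb_def by blast
        show "Orb \<subseteq> (\<lambda>j. y \<otimes>\<^bsub>H\<^esub> g [^]\<^bsub>H\<^esub> j) ` {0..n-1}"
        proof
          fix z assume "z \<in> Orb"
          then obtain j :: nat where zj: "z = y \<otimes>\<^bsub>H\<^esub> g [^]\<^bsub>H\<^esub> j" unfolding Orb_def by blast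
          have eqE: "{g [^]\<^bsub>H\<^esub> x | x. x \<in> (UNIV::nat set)} = {g [^]\<^bsub>H\<^esub> x | x. x \<in> {0..n-1}}"
            using H.ord_elems[OF fin gH] unfolding n_def .
          have "g [^]\<^bsub>H\<^esub> j \<in> {g [^]\<^bsub>H\<^esub> x | x. x \<in> {0..n-1}}" unfolding eqE[symmetric] by blast
          then obtain i :: nat where "i \<in> {0..n-1}" "g [^]\<^bsub>H\<^esub> j = g [^]\<^bsub>H\<^esub> i" by blast
          thus "z \<in> (\<lambda>j. y \<otimes>\<^bsub>H\<^esub> g [^]\<^bsub>H\<^esub> j) ` {0..n-1}" using zj by auto
        qed
      qed
      moreover have "inj_on (\<lambda>j. y \<otimes>\<^bsub>H\<^esub> g [^]\<^bsub>H\<^esub> j) {0..n-1}"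
      proof (rule inj_onI)
        fix a b assume a: "a \<in> {0..n-1}" and b: "b \<in> {0..n-1}"
          and ab: "y \<otimes>\<^bsub>H\<^esub> g [^]\<^bsub>H\<^esub> a = y \<otimes>\<^bsub>H\<^esub> g [^]\<^bsub>H\<^esub> b"
        have "g [^]\<^bsub>H\<^esub> a = g [^]\<^bsub>H\<^esub> b"
          using ab H.Units_l_cancel[of y "g [^]\<^bsub>H\<^esub> a" "g [^]\<^bsub>H\<^esub> b"] y gH H.Units_eq by simp
        thus "a = b" using H.ord_inj[OF gH] a b unfolding inj_on_def n_def by blast
      qed
      ultimately show ?thesis using n1 by (simp add: card_image)
    qed
    obtain x where x: "x \<in> XP" "ind Orb u = e [^]\<^bsub>P\<^esub> card Orb \<otimes>\<^bsub>P\<^esub> x"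
      using claim[OF Orbf subset_refl] by blast
    have xc: "x \<in> carrier P" by (rule XPc[OF x(1)])
    have "e [^]\<^bsub>P\<^esub> card Orb = ee y m" unfolding e_def using ee_pow[OF u] cardO un by simp
    hence "ind Orb u \<otimes>\<^bsub>P\<^esub> inv\<^bsub>P\<^esub> x = ee y m"
      using x(2) xc ee_carrier[OF m] by (simp add: P.m_assoc)
    moreover have "inv\<^bsub>P\<^esub> x \<in> XP" by (rule subgroup.m_inv_closed[OF XPsub x(1)])
    moreover have "ind Orb u \<in> carrier P" by (rule ind_carrier[OF u])
    ultimately show ?thesis unfolding Good_def using fixed by metis
  qed
  have good_restr: "Good (restr f S)" if "finite S" "S \<subseteq> carrier H" for S
    using that
  proof (induct S rule: finite_induct)
    case empty thus ?case using good_one by (simp add: restr_empty)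
  next
    case (insert y S)
    hence "restr f (insert y S) = restr f S \<otimes>\<^bsub>P\<^esub> ee y (f y)" using restr_insert f by simp
    moreover have "f y \<in> carrier M" using f insert by (auto simp: carrier_P)
    ultimately show ?case using good_mult insert good_ee by simp
  qed
  have "Good f" using good_restr[OF fin subset_refl] restr_full[OF f] by simp
  thus ?thesis unfolding Good_def XP_def by blast
qed

end


lemma pow_consistent': "x [^]\<^bsub>A\<lparr>carrier := S\<rparr>\<^esub> (k::nat) = x [^]\<^bsub>A\<^esub> k"
  by (simp add: nat_pow_def)

lemma sub_pow: "group A \<Longrightarrow> subgroup S A \<Longrightarrow> x \<in> S \<Longrightarrow> x [^]\<^bsub>A\<^esub> (k::nat) \<in> S"
  by (induct k) (simp_all add: subgroup.one_closed subgroup.m_closed)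

lemma ord_consistent:
  assumes "group A" "subgroup S A"
  shows "group.ord (A\<lparr>carrier := S\<rparr>) x = group.ord A x"
proof -
  have "group (A\<lparr>carrier := S\<rparr>)" by (rule group.subgroup_imp_group[OF assms])
  thus ?thesis using assms(1) by (simp add: group.ord_def pow_consistent')
qed

lemma normal_sub:
  assumes A: "group A" and XS: "subgroup XS A" and N: "N \<lhd> A\<lparr>carrier := XS\<rparr>"
  shows "subgroup N A" "N \<subseteq> XS"
proof -
  have NS: "subgroup N (A\<lparr>carrier := XS\<rparr>)" by (rule normal_imp_subgroup[OF N])
  show "subgroup N A" by (rule group.incl_subgroup[OF A XS NS])
  have "N \<subseteq> carrier (A\<lparr>carrier := XS\<rparr>)" by (rule subgroup.subset[OF NS])
  thus "N \<subseteq> XS" by simp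
qed

lemma normal_conj:
  assumes A: "group A" and XS: "subgroup XS A" and N: "N \<lhd> A\<lparr>carrier := XS\<rparr>"
    and x: "x \<in> XS" and n: "n \<in> N"
  shows "x \<otimes>\<^bsub>A\<^esub> n \<otimes>\<^bsub>A\<^esub> inv\<^bsub>A\<^esub> x \<in> N" "inv\<^bsub>A\<^esub> x \<otimes>\<^bsub>A\<^esub> n \<otimes>\<^bsub>A\<^esub> x \<in> N"
proof -
  have AX: "group (A\<lparr>carrier := XS\<rparr>)" by (rule group.subgroup_imp_group[OF A XS])
  have all: "\<forall>y\<in>XS. \<forall>h\<in>N. y \<otimes>\<^bsub>A\<^esub> h \<otimes>\<^bsub>A\<^esub> inv\<^bsub>A\<lparr>carrier := XS\<rparr>\<^esub> y \<in> N"
    using N group.normal_inv_iff[OF AX] by simp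
  have "inv\<^bsub>A\<lparr>carrier := XS\<rparr>\<^esub> x = inv\<^bsub>A\<^esub> x" using group.m_inv_consistent[OF A XS x] .
  thus "x \<otimes>\<^bsub>A\<^esub> n \<otimes>\<^bsub>A\<^esub> inv\<^bsub>A\<^esub> x \<in> N" using all[rule_format, OF x n] by simp
  have ix: "inv\<^bsub>A\<^esub> x \<in> XS" by (rule subgroup.m_inv_closed[OF XS x])
  have "inv\<^bsub>A\<lparr>carrier := XS\<rparr>\<^esub> (inv\<^bsub>A\<^esub> x) = x"
  proof -
    have "x \<in> carrier A" by (rule subgroup.mem_carrier[OF XS x])
    thus ?thesis using group.m_inv_consistent[OF A XS ix] group.inv_inv[OF A] by simp
  qed
  thus "inv\<^bsub>A\<^esub> x \<otimes>\<^bsub>A\<^esub> n \<otimes>\<^bsub>A\<^esub> x \<in> N" using all[rule_format, OF ix n] by simp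
qed

lemma set_mult_finite: "finite S \<Longrightarrow> finite T \<Longrightarrow> finite (S <#>\<^bsub>A\<^esub> T)"
  unfolding set_mult_def by auto

locale cons =
  fixes p :: "nat \<Rightarrow> nat" and M :: "nat \<Rightarrow> ('m, 'd) monoid_scheme"
    and A :: "('a, 'c) monoid_scheme" and Gc D R :: "nat \<Rightarrow> 'a set"
  assumes C: "construction p M A Gc D R"
begin

lemma A_group: "group A" using C by (simp add: construction_def)
lemma Gc1: "subgroup (Gc 1) A" "card (Gc 1) = p 1" "R 1 = Gc 1" using C by (simp_all add: construction_def)
lemma prime_p: "i \<ge> 1 \<Longrightarrow> Factorial_Ring.prime (p i)" and p_ne: "i \<ge> 1 \<Longrightarrow> p (Suc i) \<noteq> p i"
  using C by (simp_all add: construction_def)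
lemma Mi: "i \<ge> 2 \<Longrightarrow> extra_special (p i) (M i) \<and> card (carrier (M i)) = p i ^ 3"
  using C by (simp add: construction_def)
lemma Ci: assumes "i \<ge> 2" shows
  "subgroup (Gc i) A" "Gc (i - 1) \<subseteq> Gc i" "D i \<lhd> A\<lparr>carrier := Gc i\<rparr>"
  "D i \<inter> Gc (i - 1) = {\<one>\<^bsub>A\<^esub>}" "D i <#>\<^bsub>A\<^esub> Gc (i - 1) = Gc i"
  "\<exists>\<phi>. \<phi> \<in> iso (A\<lparr>carrier := D i\<rparr>)
                   (D_concrete (A\<lparr>carrier := Gc (i - 1)\<rparr>) (R (i - 1)) (M i))
             \<and> (\<forall>g \<in> Gc (i - 1). \<forall>d \<in> D i.
                  \<phi> (conj_act A g d) = quot_act (A\<lparr>carrier := Gc (i - 1)\<rparr>) g (\<phi> d))"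
  "R i = derived A (D i)"
proof -
  have "\<forall>i\<ge>2. subgroup (Gc i) A
      \<and> Gc (i - 1) \<subseteq> Gc i
      \<and> D i \<lhd> A\<lparr>carrier := Gc i\<rparr>
      \<and> D i \<inter> Gc (i - 1) = {\<one>\<^bsub>A\<^esub>}
      \<and> D i <#>\<^bsub>A\<^esub> Gc (i - 1) = Gc i
      \<and> (\<exists>\<phi>. \<phi> \<in> iso (A\<lparr>carrier := D i\<rparr>)
                   (D_concrete (A\<lparr>carrier := Gc (i - 1)\<rparr>) (R (i - 1)) (M i))
             \<and> (\<forall>g \<in> Gc (i - 1). \<forall>d \<in> D i.
                  \<phi> (conj_act A g d) = quot_act (A\<lparr>carrier := Gc (i - 1)\<rparr>) g (\<phi> d)))
      \<and> R i = derived A (D i)" using C unfolding construction_def by (elim conjE)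
  note this[rule_format, OF assms]
  thus "subgroup (Gc i) A" "Gc (i - 1) \<subseteq> Gc i" "D i \<lhd> A\<lparr>carrier := Gc i\<rparr>"
  "D i \<inter> Gc (i - 1) = {\<one>\<^bsub>A\<^esub>}" "D i <#>\<^bsub>A\<^esub> Gc (i - 1) = Gc i"
  "\<exists>\<phi>. \<phi> \<in> iso (A\<lparr>carrier := D i\<rparr>)
                   (D_concrete (A\<lparr>carrier := Gc (i - 1)\<rparr>) (R (i - 1)) (M i))
             \<and> (\<forall>g \<in> Gc (i - 1). \<forall>d \<in> D i.
                  \<phi> (conj_act A g d) = quot_act (A\<lparr>carrier := Gc (i - 1)\<rparr>) g (\<phi> d))"
  "R i = derived A (D i)" by simp_all
qed

lemma Gc_sub: "i \<ge> 1 \<Longrightarrow> subgroup (Gc i) A"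
  using Gc1 Ci(1) by (cases "i = 1") auto

lemma D_sub: "i \<ge> 2 \<Longrightarrow> subgroup (D i) A" "i \<ge> 2 \<Longrightarrow> D i \<subseteq> Gc i"
  using normal_sub[OF A_group Ci(1) Ci(3)] by auto

lemma Gc_mono: "1 \<le> a \<Longrightarrow> a \<le> b \<Longrightarrow> Gc a \<subseteq> Gc b"
proof (induct b)
  case 0 thus ?case by simp
next
  case (Suc b)
  show ?case
  proof (cases "a = Suc b")
    case True thus ?thesis by simp
  next
    case False
    hence "a \<le> b" "Suc b \<ge> 2" using Suc by auto
    thus ?thesis using Suc Ci(2)[of "Suc b"] by auto
  qed
qed

lemma R_sub: "j \<ge> 2 \<Longrightarrow> subgroup (R (j - 1)) A \<and> R (j - 1) \<subseteq> Gc (j - 1)"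
proof -
  assume j: "j \<ge> 2"
  show ?thesis
  proof (cases "j = 2")
    case True thus ?thesis using Gc1 by simp
  next
    case False
    hence j1: "j - 1 \<ge> 2" using j by simp
    have "R (j - 1) = derived A (D (j - 1))" using Ci(7)[OF j1] .
    moreover have "derived A (D (j - 1)) \<subseteq> D (j - 1)"
      using group.derived_incl[OF A_group subset_refl D_sub(1)[OF j1]] .
    moreover have "subgroup (derived A (D (j - 1))) A"
    proof -
      have "D (j - 1) \<subseteq> carrier A" using subgroup.subset[OF D_sub(1)[OF j1]] .
      thus ?thesis by (rule group.derived_is_subgroup[OF A_group])
    qed
    ultimately show ?thesis using D_sub(2)[OF j1] by auto
  qed
qed


lemma Gc_group: "i \<ge> 1 \<Longrightarrow> group (A\<lparr>carrier := Gc i\<rparr>)"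
  by (rule group.subgroup_imp_group[OF A_group Gc_sub])

lemma M_facts: assumes j: "j \<ge> 2"
  shows "group (M j)" "finite (carrier (M j))" "card (carrier (M j)) = p j ^ 3"
    "card (carrier (M j)) > 1" "derived (M j) (carrier (M j)) = group_center (M j)"
proof -
  have es: "extra_special (p j) (M j)" and c: "card (carrier (M j)) = p j ^ 3" using Mi[OF j] by auto
  show "group (M j)" "finite (carrier (M j))" "derived (M j) (carrier (M j)) = group_center (M j)"
    using es unfolding extra_special_def by auto
  show "card (carrier (M j)) = p j ^ 3" by fact
  have "p j > 1" using prime_gt_1_nat prime_p j by simp
  hence "p j ^ 3 > 1" using one_less_power[of "p j" 3] by simp
  thus "card (carrier (M j)) > 1" using c by simp
qed

lemma W_es: assumes j: "j \<ge> 2" shows "wr_es (A\<lparr>carrier := Gc (j - 1)\<rparr>) (M j)"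
proof -
  have "group (A\<lparr>carrier := Gc (j - 1)\<rparr>)" using Gc_group j by simp
  thus ?thesis using M_facts[OF j]
    by (intro wr_es.intro wr.intro wr_es_axioms.intro) simp_all
qed

lemma D_fin: assumes j: "j \<ge> 2" and fin: "finite (Gc (j - 1))"
  shows "finite (D j) \<and> (\<exists>a. card (D j) = p j ^ a)"
proof -
  interpret W: wr_es "A\<lparr>carrier := Gc (j - 1)\<rparr>" "M j" by (rule W_es[OF j])
  let ?H = "A\<lparr>carrier := Gc (j - 1)\<rparr>"
  obtain \<phi> where phi: "\<phi> \<in> iso (A\<lparr>carrier := D j\<rparr>) (D_concrete ?H (R (j - 1)) (M j))"
    using Ci(6)[OF j] by blast
  define XX where "XX = comm_act (quot_base ?H (M j)) (quot_act ?H) (carrier (quot_base ?H (M j))) (R (j - 1))"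
  have RH: "R (j - 1) \<subseteq> carrier ?H" using R_sub[OF j] by simp
  have XXsub: "subgroup XX (quot_base ?H (M j))" unfolding XX_def
  proof (rule comm_act_carrier[OF W.B_group subset_refl])
    fix x y
    assume x: "x \<in> carrier (quot_base ?H (M j))" and y: "y \<in> R (j - 1)"
    have yH: "y \<in> carrier ?H" using RH y by (rule subsetD)
    show "quot_act ?H y x \<in> carrier (quot_base ?H (M j))"
      by (rule hom_in_carrier[OF W.qa_hom[OF yH] x])
  qed
  have bij: "bij_betw \<phi> (D j) XX" using phi unfolding iso_def D_concrete_def XX_def by simp
  have finM: "finite (carrier (M j))" using M_facts[OF j] by simp
  have finP: "finite (carrier (wr_base ?H (M j)))" unfolding W.carrier_P using fin finM
    by (simp add: finite_PiE)
  have cardP: "card (carrier (wr_base ?H (M j))) = p j ^ (3 * card (Gc (j - 1)))"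
    unfolding W.carrier_P using fin M_facts(3)[OF j] by (simp add: card_PiE power_mult)
  have "card (rcosets\<^bsub>wr_base ?H (M j)\<^esub> W.K) * card W.K = order (wr_base ?H (M j))"
    by (rule W.P.lagrange[OF W.K_sub])
  hence dB: "card (carrier (quot_base ?H (M j))) dvd card (carrier (wr_base ?H (M j)))"
    unfolding W.carrier_B order_def by (rule dvdI[OF sym])
  have finB: "finite (carrier (quot_base ?H (M j)))" unfolding W.carrier_B
  proof -
    have "finite (Pow (carrier (wr_base ?H (M j))))" using finP by simp
    thus "finite (rcosets\<^bsub>wr_base ?H (M j)\<^esub> W.K)"
      using W.P.rcosets_subset_PowG[OF W.K_sub] by (rule finite_subset[rotated])
  qed
  have "card (rcosets\<^bsub>quot_base ?H (M j)\<^esub> XX) * card XX = order (quot_base ?H (M j))"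
    by (rule group.lagrange[OF W.B_group XXsub])
  hence dX: "card XX dvd card (carrier (quot_base ?H (M j)))"
    unfolding order_def by (metis dvd_triv_right)
  have cD: "card (D j) = card XX" using bij by (rule bij_betw_same_card)
  have finXX: "finite XX" using subgroup.subset[OF XXsub] finB by (rule finite_subset)
  have "finite (D j)" using bij_betw_finite[OF bij] finXX by simp
  moreover have "card (D j) dvd p j ^ (3 * card (Gc (j - 1)))"
    using dvd_trans[OF dX dB] cardP cD by simp
  hence "\<exists>a. card (D j) = p j ^ a"
    using divides_primepow_nat[OF prime_p] j by auto
  ultimately show ?thesis by blast
qed

lemma Gc_fin: "i \<ge> 1 \<Longrightarrow> finite (Gc i)"
proof (induct i)
  case 0 thus ?case by simp
next
  case (Suc i)
  show ?case
  proof (cases "i = 0")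
    case True
    have "card (Gc 1) = p 1" using Gc1 by simp
    moreover have "p 1 > 0" using prime_gt_1_nat[OF prime_p[of 1]] by simp
    ultimately show ?thesis using True card_ge_0_finite by force
  next
    case False
    hence j: "Suc i \<ge> 2" and fi: "finite (Gc i)" using Suc by auto
    have "finite (D (Suc i))" using D_fin[OF j] fi by simp
    hence "finite (D (Suc i) <#>\<^bsub>A\<^esub> Gc i)" using fi by (rule set_mult_finite)
    thus ?thesis using Ci(5)[OF j] by simp
  qed
qed

lemma R_coprime: assumes j: "j \<ge> 2" and g: "g \<in> R (j - 1)"
  shows "coprime (group.ord A g) (p j ^ 3)"
proof -
  have "\<exists>S q a. subgroup S A \<and> R (j - 1) \<subseteq> S \<and> card S = q ^ a \<and> Factorial_Ring.prime q \<and> q \<noteq> p j"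
  proof (cases "j = 2")
    case True
    have "p (Suc 1) \<noteq> p 1" by (rule p_ne) simp
    hence "p 1 \<noteq> p j" using True by (simp add: numeral_2_eq_2)
    moreover have "R (j - 1) \<subseteq> Gc 1" "card (Gc 1) = p 1 ^ 1" using Gc1 True by simp_all
    moreover have "Factorial_Ring.prime (p 1)" by (rule prime_p) simp
    ultimately show ?thesis using Gc1(1) by blast
  next
    case False
    hence j1: "j - 1 \<ge> 2" using j by simp
    have fin: "finite (Gc (j - 1 - 1))" by (rule Gc_fin) (use j1 in simp)
    obtain a where a: "card (D (j - 1)) = p (j - 1) ^ a"
      using D_fin[OF j1 fin] by blast
    have RD: "R (j - 1) \<subseteq> D (j - 1)"
      using Ci(7)[OF j1] group.derived_incl[OF A_group subset_refl D_sub(1)[OF j1]] by simp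
    have "p (Suc (j - 1)) \<noteq> p (j - 1)" by (rule p_ne) (use j1 in simp)
    hence "p (j - 1) \<noteq> p j" using j by simp
    moreover have "Factorial_Ring.prime (p (j - 1))" by (rule prime_p) (use j1 in simp)
    ultimately show ?thesis using D_sub(1)[OF j1] RD a by blast
  qed
  then obtain S q a where S: "subgroup S A" "R (j - 1) \<subseteq> S" "card S = q ^ a"
      and q: "Factorial_Ring.prime q" "q \<noteq> p j" by blast
  have gS: "g \<in> S" using S(2) g by (rule subsetD)
  have AS: "group (A\<lparr>carrier := S\<rparr>)" by (rule group.subgroup_imp_group[OF A_group S(1)])
  have "group.ord (A\<lparr>carrier := S\<rparr>) g dvd order (A\<lparr>carrier := S\<rparr>)"
    using group.ord_dvd_group_order[OF AS, of g] gS by simp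
  hence "group.ord A g dvd q ^ a" using ord_consistent[OF A_group S(1)] S(3) by (simp add: order_def)
  then obtain b where b: "group.ord A g = q ^ b" using divides_primepow_nat[OF q(1)] by blast
  have pj: "Factorial_Ring.prime (p j)" by (rule prime_p) (use j in simp)
  have "coprime q (p j)" by (rule primes_coprime[OF q(1) pj q(2)])
  thus ?thesis using b by simp
qed

lemma core_j: assumes j: "j \<ge> 2" shows "comm_act A (conj_act A) (D j) (R (j - 1)) = D j"
proof -
  interpret W: wr_es "A\<lparr>carrier := Gc (j - 1)\<rparr>" "M j" by (rule W_es[OF j])
  let ?H = "A\<lparr>carrier := Gc (j - 1)\<rparr>"
  obtain \<phi> where phi: "\<phi> \<in> iso (A\<lparr>carrier := D j\<rparr>) (D_concrete ?H (R (j - 1)) (M j))"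
    and eq: "\<forall>g \<in> Gc (j - 1). \<forall>d \<in> D j. \<phi> (conj_act A g d) = quot_act ?H g (\<phi> d)"
    using Ci(6)[OF j] by blast
  define XX where "XX = comm_act (quot_base ?H (M j)) (quot_act ?H) (carrier (quot_base ?H (M j))) (R (j - 1))"
  have RH: "R (j - 1) \<subseteq> carrier ?H" using R_sub[OF j] by simp
  have XXsub: "subgroup XX (quot_base ?H (M j))" unfolding XX_def
  proof (rule comm_act_carrier[OF W.B_group subset_refl])
    fix x y
    assume x: "x \<in> carrier (quot_base ?H (M j))" and y: "y \<in> R (j - 1)"
    have yH: "y \<in> carrier ?H" using RH y by (rule subsetD)
    show "quot_act ?H y x \<in> carrier (quot_base ?H (M j))"
      by (rule hom_in_carrier[OF W.qa_hom[OF yH] x])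
  qed
  have fin: "finite (Gc (j - 1))" by (rule Gc_fin) (use j in simp)
  have RA: "subgroup (R (j - 1)) A" using R_sub[OF j] by simp
  have GA: "subgroup (Gc (j - 1)) A" by (rule Gc_sub) (use j in simp)
  have coreB: "comm_act (quot_base ?H (M j)) (quot_act ?H) XX (R (j - 1)) = XX"
    unfolding XX_def
  proof (rule W.core_B[OF RH])
    fix g f assume g: "g \<in> R (j - 1)" and f: "f \<in> carrier (wr_base ?H (M j))"
    show "\<exists>c x. c \<in> carrier (wr_base ?H (M j)) \<and> wr_act ?H g c = c
                  \<and> x \<in> comm_act (wr_base ?H (M j)) (wr_act ?H) (carrier (wr_base ?H (M j))) (R (j - 1))
                  \<and> f = c \<otimes>\<^bsub>wr_base ?H (M j)\<^esub> x"
    proof (rule W.dec_P[OF _ _ _ RH g _ _ f])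
      show "finite (carrier ?H)" using fin by simp
      show "finite (carrier (M j))" using M_facts(2)[OF j] .
      show "card (carrier (M j)) > 1" using M_facts(4)[OF j] .
      show "g [^]\<^bsub>?H\<^esub> k \<in> R (j - 1)" for k :: nat
        using sub_pow[OF A_group RA g, of k] by (simp add: pow_consistent')
      show "coprime (group.ord ?H g) (card (carrier (M j)))"
        using R_coprime[OF j g] ord_consistent[OF A_group GA] M_facts(3)[OF j] by simp
    qed
  qed
  show ?thesis
  proof (rule iso_transfer[OF A_group D_sub(1)[OF j] W.B_group XXsub])
    show "\<phi> \<in> iso (A\<lparr>carrier := D j\<rparr>) ((quot_base ?H (M j))\<lparr>carrier := XX\<rparr>)"
      using phi unfolding D_concrete_def XX_def .
    show "\<phi> (conj_act A g d) = quot_act ?H g (\<phi> d)" if "g \<in> R (j - 1)" "d \<in> D j" for g d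
      using eq that RH by auto
    show "conj_act A g d \<in> D j" if g: "g \<in> R (j - 1)" and d: "d \<in> D j" for g d
    proof -
      have "Gc (j - 1) \<subseteq> Gc j" by (rule Gc_mono) (use j in simp_all)
      hence "g \<in> Gc j" using RH g by auto
      thus ?thesis using normal_conj(2)[OF A_group Ci(1)[OF j] Ci(3)[OF j] _ d] unfolding conj_act_def by simp
    qed
    show "comm_act (quot_base ?H (M j)) (quot_act ?H) XX (R (j - 1)) = XX" by (rule coreB)
  qed
qed

end


lemma (in group) set_mult_mem: "y \<in> N <#> T \<longleftrightarrow> (\<exists>d\<in>N. \<exists>t\<in>T. y = d \<otimes> t)"
  unfolding set_mult_def by blast

lemma (in group) nt_subgroup:
  assumes XS: "subgroup XS G" and N: "N \<lhd> G\<lparr>carrier := XS\<rparr>" and T: "subgroup T G" and TX: "T \<subseteq> XS"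
  shows "subgroup (N <#> T) G"
proof -
  have NG: "subgroup N G" "N \<subseteq> XS" using normal_sub[OF is_group XS N] by auto
  have Nc: "x \<in> N \<Longrightarrow> x \<in> carrier G" for x using subgroup.mem_carrier[OF NG(1)] .
  have Tc: "x \<in> T \<Longrightarrow> x \<in> carrier G" for x using subgroup.mem_carrier[OF T] .
  show ?thesis
  proof (rule subgroupI)
    show "N <#> T \<subseteq> carrier G" using Nc Tc unfolding set_mult_def by auto
    have "\<one> \<otimes> \<one> \<in> N <#> T" unfolding set_mult_mem using subgroup.one_closed[OF NG(1)] subgroup.one_closed[OF T] by blast
    thus "N <#> T \<noteq> {}" by blast
  next
    fix a assume "a \<in> N <#> T"
    then obtain d t where d: "d \<in> N" and t: "t \<in> T" and a: "a = d \<otimes> t" unfolding set_mult_mem by blast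
    have dc: "d \<in> carrier G" and tc: "t \<in> carrier G" using Nc[OF d] Tc[OF t] .
    have tX: "t \<in> XS" using TX t by (rule subsetD)
    have "inv t \<otimes> inv d \<otimes> t \<in> N"
      using normal_conj(2)[OF is_group XS N tX subgroup.m_inv_closed[OF NG(1) d]] .
    moreover have "inv t \<in> T" using subgroup.m_inv_closed[OF T t] .
    moreover have "inv a = (inv t \<otimes> inv d \<otimes> t) \<otimes> inv t"
      using a dc tc by (simp add: inv_mult_group m_assoc)
    ultimately show "inv a \<in> N <#> T" unfolding set_mult_mem by blast
  next
    fix a b assume "a \<in> N <#> T" "b \<in> N <#> T"
    then obtain d1 t1 d2 t2 where d: "d1 \<in> N" "d2 \<in> N" and t: "t1 \<in> T" "t2 \<in> T"
      and ab: "a = d1 \<otimes> t1" "b = d2 \<otimes> t2" unfolding set_mult_mem by blast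
    have c: "d1 \<in> carrier G" "d2 \<in> carrier G" "t1 \<in> carrier G" "t2 \<in> carrier G"
      using Nc d Tc t by auto
    have tX: "t1 \<in> XS" using TX t(1) by (rule subsetD)
    have "t1 \<otimes> d2 \<otimes> inv t1 \<in> N" using normal_conj(1)[OF is_group XS N tX d(2)] .
    hence "d1 \<otimes> (t1 \<otimes> d2 \<otimes> inv t1) \<in> N" using subgroup.m_closed[OF NG(1) d(1)] by blast
    moreover have "t1 \<otimes> t2 \<in> T" using subgroup.m_closed[OF T t] .
    moreover have "a \<otimes> b = (d1 \<otimes> (t1 \<otimes> d2 \<otimes> inv t1)) \<otimes> (t1 \<otimes> t2)"
      using ab c by (simp add: m_assoc)
    ultimately show "a \<otimes> b \<in> N <#> T" unfolding set_mult_mem by blast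
  qed
qed

lemma (in group) nt_normal:
  assumes XS: "subgroup XS G" and N: "N \<lhd> G\<lparr>carrier := XS\<rparr>"
    and Y: "subgroup Y G" and YX: "Y \<subseteq> XS" and NY: "N <#> Y = XS"
    and T: "T \<lhd> G\<lparr>carrier := Y\<rparr>"
  shows "N <#> T \<lhd> G\<lparr>carrier := XS\<rparr>"
proof -
  have NG: "subgroup N G" "N \<subseteq> XS" using normal_sub[OF is_group XS N] by auto
  have TG: "subgroup T G" "T \<subseteq> Y" using normal_sub[OF is_group Y T] by auto
  have TX: "T \<subseteq> XS" using TG(2) YX by blast
  have Nc: "x \<in> N \<Longrightarrow> x \<in> carrier G" for x using subgroup.mem_carrier[OF NG(1)] .
  have Tc: "x \<in> T \<Longrightarrow> x \<in> carrier G" for x using subgroup.mem_carrier[OF TG(1)] .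
  have Yc: "x \<in> Y \<Longrightarrow> x \<in> carrier G" for x using subgroup.mem_carrier[OF Y] .
  have sub: "subgroup (N <#> T) G" by (rule nt_subgroup[OF XS N TG(1) TX])
  have NTX: "N <#> T \<subseteq> XS"
  proof
    fix y assume "y \<in> N <#> T"
    then obtain d t where "d \<in> N" "t \<in> T" "y = d \<otimes> t" unfolding set_mult_mem by blast
    thus "y \<in> XS" using NG(2) TX subgroup.m_closed[OF XS] by blast
  qed
  have GX: "group (G\<lparr>carrier := XS\<rparr>)" by (rule subgroup_imp_group[OF XS])
  show ?thesis
  proof (subst group.normal_inv_iff[OF GX], intro conjI ballI)
    show "subgroup (N <#> T) (G\<lparr>carrier := XS\<rparr>)" by (rule subgroup_incl[OF sub XS NTX])
  next
    fix x y assume x: "x \<in> carrier (G\<lparr>carrier := XS\<rparr>)" and y: "y \<in> N <#> T"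
    have xX: "x \<in> XS" using x by simp
    have "inv\<^bsub>G\<lparr>carrier := XS\<rparr>\<^esub> x = inv x" by (rule m_inv_consistent[OF XS xX])
    moreover
    have "x \<otimes> y \<otimes> inv x \<in> N <#> T"
    proof -
      obtain d t where d: "d \<in> N" and t: "t \<in> T" and yd: "y = d \<otimes> t" using y unfolding set_mult_mem by blast
      have "x \<in> N <#> Y" using xX NY by simp
      then obtain d0 h where d0: "d0 \<in> N" and h: "h \<in> Y" and xd: "x = d0 \<otimes> h" unfolding set_mult_mem by blast
      have c: "d \<in> carrier G" "t \<in> carrier G" "d0 \<in> carrier G" "h \<in> carrier G"
        using Nc[OF d] Tc[OF t] Nc[OF d0] Yc[OF h] .
      define t' where "t' = h \<otimes> t \<otimes> inv h"
      have t': "t' \<in> T" unfolding t'_def by (rule normal_conj(1)[OF is_group Y T h t])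
      have t'c: "t' \<in> carrier G" using Tc[OF t'] .
      have t'X: "t' \<in> XS" using TX t' by (rule subsetD)
      have n1: "x \<otimes> d \<otimes> inv x \<in> N" by (rule normal_conj(1)[OF is_group XS N xX d])
      have n2: "t' \<otimes> inv d0 \<otimes> inv t' \<in> N"
        by (rule normal_conj(1)[OF is_group XS N t'X subgroup.m_inv_closed[OF NG(1) d0]])
      have n3: "(x \<otimes> d \<otimes> inv x) \<otimes> d0 \<otimes> (t' \<otimes> inv d0 \<otimes> inv t') \<in> N"
        using subgroup.m_closed[OF NG(1) subgroup.m_closed[OF NG(1) n1 d0] n2] .
      have xc: "x \<in> carrier G" using xd c by simp
      have "x \<otimes> y \<otimes> inv x = (x \<otimes> d \<otimes> inv x) \<otimes> (d0 \<otimes> t' \<otimes> inv d0)"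
        unfolding yd xd t'_def using c by (simp add: m_assoc inv_mult_group)
      also have "d0 \<otimes> t' \<otimes> inv d0 = d0 \<otimes> (t' \<otimes> inv d0 \<otimes> inv t') \<otimes> t'"
        using c t'c by (simp add: m_assoc)
      finally have "x \<otimes> y \<otimes> inv x = ((x \<otimes> d \<otimes> inv x) \<otimes> d0 \<otimes> (t' \<otimes> inv d0 \<otimes> inv t')) \<otimes> t'"
        using c t'c xc by (simp add: m_assoc)
      thus ?thesis using n3 t' unfolding set_mult_mem by blast
    qed
    ultimately show "x \<otimes>\<^bsub>G\<lparr>carrier := XS\<rparr>\<^esub> y \<otimes>\<^bsub>G\<lparr>carrier := XS\<rparr>\<^esub> inv\<^bsub>G\<lparr>carrier := XS\<rparr>\<^esub> x \<in> N <#> T"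
      by simp
  qed
qed

lemma (in group) nt_cap:
  assumes NG: "subgroup N G" and NY: "N \<inter> Y = {\<one>}" and Y: "subgroup Y G"
    and TG: "subgroup T G" and TY: "T \<subseteq> Y" and ZY: "Z \<subseteq> Y" and TZ: "T \<inter> Z = {\<one>}"
  shows "(N <#> T) \<inter> Z = {\<one>}"
proof
  show "{\<one>} \<subseteq> (N <#> T) \<inter> Z"
  proof -
    have "\<one> \<otimes> \<one> \<in> N <#> T" unfolding set_mult_mem using subgroup.one_closed[OF NG] subgroup.one_closed[OF TG] by blast
    moreover have "\<one> \<in> Z" using TZ by blast
    ultimately show ?thesis by simp
  qed
  show "(N <#> T) \<inter> Z \<subseteq> {\<one>}"
  proof
    fix y assume yy: "y \<in> (N <#> T) \<inter> Z"
    hence yZ: "y \<in> Z" and "y \<in> N <#> T" by auto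
    then obtain d t where d: "d \<in> N" and t: "t \<in> T" and yd: "y = d \<otimes> t"
      unfolding set_mult_mem by blast
    have tY: "t \<in> Y" using TY t by (rule subsetD)
    have yY: "y \<in> Y" using ZY yZ by (rule subsetD)
    have c: "d \<in> carrier G" "t \<in> carrier G" using subgroup.mem_carrier[OF NG d] subgroup.mem_carrier[OF TG t] .
    have "d = y \<otimes> inv t" using yd c by (simp add: m_assoc)
    moreover have "y \<otimes> inv t \<in> Y" using subgroup.m_closed[OF Y yY subgroup.m_inv_closed[OF Y tY]] .
    ultimately have "d \<in> N \<inter> Y" using d by simp
    hence "d = \<one>" using NY by blast
    hence "y = t" using yd c by simp
    hence "y \<in> T \<inter> Z" using t yZ by simp
    thus "y \<in> {\<one>}" using TZ by blast
  qed
qed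

lemma (in group) comm_conj_norm:
  assumes S: "subgroup S G" and Rc: "Rs \<subseteq> carrier G" and t: "t \<in> S"
    and w: "w \<in> comm_act G (conj_act G) S Rs"
  shows "inv t \<otimes> w \<otimes> t \<in> comm_act G (conj_act G) S Rs"
proof -
  let ?Sg = "\<Union>x\<in>S. \<Union>g\<in>Rs. {inv x \<otimes> conj_act G g x}"
  have Sc: "x \<in> S \<Longrightarrow> x \<in> carrier G" for x using subgroup.mem_carrier[OF S] .
  have tc: "t \<in> carrier G" using Sc[OF t] .
  have Sgc: "?Sg \<subseteq> carrier G"
  proof clarify
    fix x g assume "x \<in> S" "g \<in> Rs"
    hence "x \<in> carrier G" "g \<in> carrier G" using Sc Rc by auto
    thus "inv x \<otimes> conj_act G g x \<in> carrier G" by (simp add: conj_act_def)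
  qed
  have gen: "inv t \<otimes> s \<otimes> t \<in> generate G ?Sg" if s: "s \<in> ?Sg" for s
  proof -
    obtain x g where x: "x \<in> S" and g: "g \<in> Rs" and sx: "s = inv x \<otimes> conj_act G g x" using s by blast
    have xc: "x \<in> carrier G" and gc: "g \<in> carrier G" using Sc[OF x] subsetD[OF Rc g] .
    have xt: "x \<otimes> t \<in> S" using subgroup.m_closed[OF S x t] .
    have "inv t \<otimes> s \<otimes> t = (inv (x \<otimes> t) \<otimes> conj_act G g (x \<otimes> t)) \<otimes> inv (inv t \<otimes> conj_act G g t)"
      unfolding sx conj_act_def using xc gc tc by (simp add: m_assoc inv_mult_group)
    moreover have "inv (x \<otimes> t) \<otimes> conj_act G g (x \<otimes> t) \<in> generate G ?Sg"
      by (rule generate.incl) (use xt g in blast)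
    moreover have "inv (inv t \<otimes> conj_act G g t) \<in> generate G ?Sg"
      by (rule generate.inv) (use t g in blast)
    ultimately show ?thesis by (simp add: generate.eng)
  qed
  have "w \<in> generate G ?Sg" using w unfolding comm_act_def .
  hence "inv t \<otimes> w \<otimes> t \<in> generate G ?Sg"
  proof induct
    case one thus ?case using tc generate.one by simp
  next
    case (incl h) thus ?case by (rule gen)
  next
    case (inv h)
    have hc: "h \<in> carrier G" using inv Sgc by blast
    have "inv t \<otimes> inv h \<otimes> t = inv (inv t \<otimes> h \<otimes> t)" using hc tc by (simp add: m_assoc inv_mult_group)
    thus ?case using generate_m_inv_closed[OF Sgc gen[OF inv]] by simp
  next
    case (eng a b)
    have c: "a \<in> carrier G" "b \<in> carrier G" using eng generate_in_carrier[OF Sgc] by auto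
    have "inv t \<otimes> (a \<otimes> b) \<otimes> t = (inv t \<otimes> a \<otimes> t) \<otimes> (inv t \<otimes> b \<otimes> t)" using c tc by (simp add: m_assoc)
    thus ?case using generate.eng[OF eng(2) eng(4)] by simp
  qed
  thus ?thesis unfolding comm_act_def .
qed



context cons begin

lemma T_main: assumes k: "k \<ge> 2"
  shows "T_prod A D k n \<lhd> A\<lparr>carrier := Gc (k + n)\<rparr>
   \<and> T_prod A D k n \<inter> Gc (k - 1) = {\<one>\<^bsub>A\<^esub>}
   \<and> T_prod A D k n <#>\<^bsub>A\<^esub> Gc (k - 1) = Gc (k + n)
   \<and> comm_act A (conj_act A) (T_prod A D k n) (R (k - 1)) = T_prod A D k n
   \<and> D (k + n) \<subseteq> T_prod A D k n"
proof (induct n)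
  case 0
  show ?case using Ci(3)[OF k] Ci(4)[OF k] Ci(5)[OF k] core_j[OF k] by simp
next
  case (Suc n)
  define i where "i = k + n"
  define T where "T = T_prod A D k n"
  have i2: "Suc i \<ge> 2" and i1: "i \<ge> 1" and ii2: "i \<ge> 2" using k i_def by auto
  have IH: "T \<lhd> A\<lparr>carrier := Gc i\<rparr>" "T \<inter> Gc (k - 1) = {\<one>\<^bsub>A\<^esub>}" "T <#>\<^bsub>A\<^esub> Gc (k - 1) = Gc i"
    "comm_act A (conj_act A) T (R (k - 1)) = T" "D i \<subseteq> T"
    using Suc unfolding T_def i_def by auto
  have TP: "T_prod A D k (Suc n) = D (Suc i) <#>\<^bsub>A\<^esub> T" by (simp add: T_def i_def)
  have kSn: "k + Suc n = Suc i" by (simp add: i_def)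
  have Dn: "D (Suc i) \<lhd> A\<lparr>carrier := Gc (Suc i)\<rparr>" using Ci(3)[OF i2] .
  have GiG: "Gc i \<subseteq> Gc (Suc i)" using Ci(2)[OF i2] by simp
  have DcapG: "D (Suc i) \<inter> Gc i = {\<one>\<^bsub>A\<^esub>}" using Ci(4)[OF i2] by simp
  have DG: "D (Suc i) <#>\<^bsub>A\<^esub> Gc i = Gc (Suc i)" using Ci(5)[OF i2] by simp
  have GiS: "subgroup (Gc i) A" by (rule Gc_sub[OF i1])
  have GSS: "subgroup (Gc (Suc i)) A" by (rule Ci(1)[OF i2])
  have TG: "subgroup T A" "T \<subseteq> Gc i" using normal_sub[OF A_group GiS IH(1)] by auto
  have DS: "subgroup (D (Suc i)) A" "D (Suc i) \<subseteq> Gc (Suc i)" using D_sub[OF i2] by auto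
  have Gk: "Gc (k - 1) \<subseteq> Gc i" by (rule Gc_mono) (use k i_def in auto)
  have GkS: "subgroup (Gc (k - 1)) A" by (rule Gc_sub) (use k in simp)
  define T' where "T' = D (Suc i) <#>\<^bsub>A\<^esub> T"
  have Na: "T' \<lhd> A\<lparr>carrier := Gc (Suc i)\<rparr>" unfolding T'_def
    by (rule group.nt_normal[OF A_group GSS Dn GiS GiG DG IH(1)])
  have Nb: "T' \<inter> Gc (k - 1) = {\<one>\<^bsub>A\<^esub>}" unfolding T'_def
    by (rule group.nt_cap[OF A_group DS(1) DcapG GiS TG(1) TG(2) Gk IH(2)])
  have "T' <#>\<^bsub>A\<^esub> Gc (k - 1) = D (Suc i) <#>\<^bsub>A\<^esub> (T <#>\<^bsub>A\<^esub> Gc (k - 1))" unfolding T'_def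
    by (rule group.set_mult_assoc[OF A_group subgroup.subset[OF DS(1)] subgroup.subset[OF TG(1)] subgroup.subset[OF GkS]])
  hence Nc: "T' <#>\<^bsub>A\<^esub> Gc (k - 1) = Gc (Suc i)" using IH(3) DG by simp
  have T'G: "subgroup T' A" "T' \<subseteq> Gc (Suc i)" using normal_sub[OF A_group GSS Na] by auto
  have Rk: "R (k - 1) \<subseteq> Gc (k - 1)" "subgroup (R (k - 1)) A" using R_sub[OF k] by auto
  have RkG: "R (k - 1) \<subseteq> Gc (Suc i)" using Rk(1) Gk GiG by blast
  have Rc: "R (k - 1) \<subseteq> carrier A" using RkG subgroup.subset[OF GSS] by blast
  have one_D: "\<one>\<^bsub>A\<^esub> \<in> D (Suc i)" by (rule subgroup.one_closed[OF DS(1)])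
  have one_T: "\<one>\<^bsub>A\<^esub> \<in> T" by (rule subgroup.one_closed[OF TG(1)])
  have TinT': "T \<subseteq> T'"
  proof
    fix t assume t: "t \<in> T"
    have "t = \<one>\<^bsub>A\<^esub> \<otimes>\<^bsub>A\<^esub> t" using subgroup.mem_carrier[OF TG(1) t] by (simp add: group.is_monoid[OF A_group])
    thus "t \<in> T'" unfolding T'_def using one_D t group.set_mult_mem[OF A_group] by blast
  qed
  have DinT': "D (Suc i) \<subseteq> T'"
  proof
    fix d assume d: "d \<in> D (Suc i)"
    have "d = d \<otimes>\<^bsub>A\<^esub> \<one>\<^bsub>A\<^esub>" using subgroup.mem_carrier[OF DS(1) d] by (simp add: group.is_monoid[OF A_group])
    thus "d \<in> T'" unfolding T'_def using one_T d group.set_mult_mem[OF A_group] by blast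
  qed
  have conjT': "conj_act A g y \<in> T'" if g: "g \<in> R (k - 1)" and y: "y \<in> T'" for g y
  proof -
    have "g \<in> Gc (Suc i)" using RkG g by (rule subsetD)
    thus ?thesis using normal_conj(2)[OF A_group GSS Na _ y] unfolding conj_act_def by simp
  qed
  define W where "W = comm_act A (conj_act A) T' (R (k - 1))"
  have Wsub: "subgroup W A" unfolding W_def
  proof (rule comm_act_carrier[OF A_group subgroup.subset[OF T'G(1)]])
    fix x y assume "x \<in> T'" "y \<in> R (k - 1)"
    thus "conj_act A y x \<in> carrier A" using conjT' subgroup.mem_carrier[OF T'G(1)] by blast
  qed
  have WT': "W \<subseteq> T'" unfolding W_def comm_act_def
  proof (rule group.generate_subgroup_incl[OF A_group _ T'G(1)], clarify)
    fix y g assume y: "y \<in> T'" and g: "g \<in> R (k - 1)"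
    show "inv\<^bsub>A\<^esub> y \<otimes>\<^bsub>A\<^esub> conj_act A g y \<in> T'"
      using subgroup.m_closed[OF T'G(1) subgroup.m_inv_closed[OF T'G(1) y] conjT'[OF g y]] .
  qed
  have TW: "T \<subseteq> W"
  proof -
    have "comm_act A (conj_act A) T (R (k - 1)) \<subseteq> W" unfolding W_def comm_act_def
      by (rule group.mono_generate[OF A_group]) (use TinT' in blast)
    thus ?thesis using IH(4) by simp
  qed
  have RiW: "R i \<subseteq> W"
  proof -
    have "R i \<subseteq> D i"
      using Ci(7)[OF ii2] group.derived_incl[OF A_group subset_refl D_sub(1)[OF ii2]] by simp
    thus ?thesis using IH(5) TW by blast
  qed
  have DW: "D (Suc i) \<subseteq> W"
  proof -
    have core: "comm_act A (conj_act A) (D (Suc i)) (R i) = D (Suc i)" using core_j[OF i2] by simp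
    have "comm_act A (conj_act A) (D (Suc i)) (R i) \<subseteq> W" unfolding comm_act_def[of A _ "D (Suc i)"]
    proof (rule group.generate_subgroup_incl[OF A_group _ Wsub], clarify)
      fix d g assume d: "d \<in> D (Suc i)" and g: "g \<in> R i"
      have gW: "g \<in> W" using RiW g by (rule subsetD)
      have dT': "d \<in> T'" using DinT' d by (rule subsetD)
      have dc: "d \<in> carrier A" by (rule subgroup.mem_carrier[OF DS(1) d])
      have gc: "g \<in> carrier A" by (rule subgroup.mem_carrier[OF Wsub gW])
      have "inv\<^bsub>A\<^esub> d \<otimes>\<^bsub>A\<^esub> inv\<^bsub>A\<^esub> g \<otimes>\<^bsub>A\<^esub> d \<in> W"
        unfolding W_def
        by (rule group.comm_conj_norm[OF A_group T'G(1) Rc dT' subgroup.m_inv_closed[OF Wsub gW, unfolded W_def]])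
      hence "(inv\<^bsub>A\<^esub> d \<otimes>\<^bsub>A\<^esub> inv\<^bsub>A\<^esub> g \<otimes>\<^bsub>A\<^esub> d) \<otimes>\<^bsub>A\<^esub> g \<in> W"
        using subgroup.m_closed[OF Wsub _ gW] by blast
      moreover have "inv\<^bsub>A\<^esub> d \<otimes>\<^bsub>A\<^esub> conj_act A g d = (inv\<^bsub>A\<^esub> d \<otimes>\<^bsub>A\<^esub> inv\<^bsub>A\<^esub> g \<otimes>\<^bsub>A\<^esub> d) \<otimes>\<^bsub>A\<^esub> g"
      proof -
        interpret AG: group A by (rule A_group)
        show ?thesis unfolding conj_act_def using dc gc by (simp add: AG.m_assoc)
      qed
      ultimately show "inv\<^bsub>A\<^esub> d \<otimes>\<^bsub>A\<^esub> conj_act A g d \<in> W" by simp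
    qed
    thus ?thesis using core by simp
  qed
  have T'W: "T' \<subseteq> W"
  proof
    fix y assume "y \<in> T'"
    then obtain d t where "d \<in> D (Suc i)" "t \<in> T" "y = d \<otimes>\<^bsub>A\<^esub> t"
      unfolding T'_def group.set_mult_mem[OF A_group] by blast
    thus "y \<in> W" using DW TW subgroup.m_closed[OF Wsub] by blast
  qed
  have Nd: "comm_act A (conj_act A) T' (R (k - 1)) = T'" using WT' T'W unfolding W_def by blast
  have "D (Suc i) \<subseteq> T'" by (rule DinT')
  thus ?case using Na Nb Nc Nd unfolding TP kSn T'_def by simp
qed

end

theorem lemma2p6:
  fixes p :: "nat \<Rightarrow> nat" and M :: "nat \<Rightarrow> ('m, 'd) monoid_scheme"
    and A :: "('a, 'c) monoid_scheme" and Gc D R :: "nat \<Rightarrow> 'a set"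
    and i :: nat
  assumes "construction p M A Gc D R"
    and "i \<ge> 2"
  shows "\<forall>k. 2 \<le> k \<and> k \<le> i \<longrightarrow>
           T_set A D i k \<lhd> A\<lparr>carrier := Gc i\<rparr>
         \<and> T_set A D i k \<inter> Gc (k - 1) = {\<one>\<^bsub>A\<^esub>}
         \<and> T_set A D i k <#>\<^bsub>A\<^esub> Gc (k - 1) = Gc i
         \<and> comm_act A (conj_act A) (T_set A D i k) (R (k - 1)) = T_set A D i k"
proof (intro allI impI)
  interpret C: cons p M A Gc D R using assms(1) by (simp add: cons_def)
  fix k assume k: "2 \<le> k \<and> k \<le> i"
  have ki: "k + (i - k) = i" using k by simp
  show "T_set A D i k \<lhd> A\<lparr>carrier := Gc i\<rparr>
         \<and> T_set A D i k \<inter> Gc (k - 1) = {\<one>\<^bsub>A\<^esub>}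
         \<and> T_set A D i k <#>\<^bsub>A\<^esub> Gc (k - 1) = Gc i
         \<and> comm_act A (conj_act A) (T_set A D i k) (R (k - 1)) = T_set A D i k"
    using C.T_main[of k "i - k"] k unfolding T_set_def ki by simp
qed


end
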